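(* Let $n\mid(q+1)$, let $\delta\ge2$ be even, and let $b,s,m$ be positive integers with $\gcd(b,n)=1$. Let $t\in\{0,\dots,n-1\}$ and let $i_1<\dots<i_s$ be integers with $m-1+\delta\le i_1$, $i_s\le n-\delta$ and $i_{\ell+1}-i_\ell\ge\delta$ for $\ell=1,\dots,s-1$. Put $$A=\{\alpha^{t},\alpha^{t+b},\dots,\alpha^{t+(m-1)b},\alpha^{t+i_1b},\dots,\alpha^{t+i_sb}\},\qquad B=\{\alpha^{jb}: -\tfrac{\delta-2}{2}\le j\le\tfrac{\delta-2}{2}\}.$$ Suppose $\{j:\alpha^j\in AB\}$ is a union of $q$-cyclotomic cosets modulo $n$. Let $d_A^{\perp}$ be the minimum distance of the dual of the cyclic code of length $n$ over $\mathbb{F}_{q^2}$ with complete defining set $A$. Then $C_{AB}$ is a cyclic $(d_A^{\perp}-\delta+1,\delta)$-LRC of length $n$ over $\mathbb{F}_q$ with dimension $k=n-m+1-(s+1)(\delta-1)$. Moreover, if $\lceil k/r\rceil=s+1$ where $r=d_A^{\perp}-\delta+1$, then $C_{AB}$ is an optimal $(r,\delta)$-LRC with minimum distance $m+\delta-1$.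
   Context: Let $q$ be a prime power and $n\mid(q+1)$, so the multiplicative order of $q$ modulo $n$ divides $2$ and the set $R_n$ of all $n$-th roots of unity lies in $\mathbb{F}_{q^2}$; let $\alpha\in\mathbb{F}_{q^2}$ be a primitive $n$-th root of unity. For $A,B\subseteq R_n$, $AB=\{\beta\gamma:\beta\in A,\gamma\in B\}$. For $Z\subseteq R_n$, the cyclic code of length $n$ over $\mathbb{F}_{q^2}$ with complete defining set $Z$ is the ideal generated by $\prod_{\beta\in Z}(x-\beta)$ in $\mathbb{F}_{q^2}[x]/(x^n-1)$; if $\{j:\alpha^j\in Z\}$ is a union of $q$-cyclotomic cosets modulo $n$ (equivalently here, closed under $j\mapsto -j \bmod n$), this polynomial lies in $\mathbb{F}_q[x]$ and $C_Z$ denotes the cyclic code of length $n$ over $\mathbb{F}_q$ it generates in $\mathbb{F}_q[x]/(x^n-1)$ (dimension $n-|Z|$). Locality: for a linear code $C\subseteq\mathbb{F}_q^n$ and integers $r\ge1$, $\delta\ge2$, the $i$-th coordinate has $(r,\delta)$-locality if there is $S_i\subseteq\{1,\dots,n\}$ with $i\in S_i$, $|S_i|\le r+\delta-1$ such that the punctured code $C|_{S_i}$ has minimum distance at least $\delta$; $C$ is an $(r,\delta)$-LRC if every coordinate has $(r,\delta)$-locality. An $[n,k,d]$ $(r,\delta)$-LRC is optimal if $d=n-k-(\lceil k/r\rceil-1)(\delta-1)+1$ (always an upper bound on $d$). *)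

theory Defs
  imports "HOL-Computational_Algebra.Polynomial" "HOL-Computational_Algebra.Primes"
begin

text \<open>Vectors of length n are functions nat => 'a (coordinates 0..n-1 used).
  The big field F_{q^2} is a finite field type 'a with CARD('a) = q^2; the
  subfield F_q is the fixed field {x. x^q = x} of the Frobenius.\<close>

definition in_subfield :: "nat \<Rightarrow> 'a::field \<Rightarrow> bool" where
  "in_subfield q x \<longleftrightarrow> x ^ q = x"

definition rpow :: "'a::field \<Rightarrow> nat \<Rightarrow> int \<Rightarrow> 'a" where
  "rpow \<alpha> n j = \<alpha> ^ nat (j mod int n)"

definition setmult :: "'a::times set \<Rightarrow> 'a set \<Rightarrow> 'a set" where
  "setmult A B = {x * y | x y. x \<in> A \<and> y \<in> B}"

definition gen_poly :: "'a::field set \<Rightarrow> 'a poly" where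
  "gen_poly Z = (\<Prod>\<beta>\<in>Z. [:- \<beta>, 1:])"

definition cyc_code_ext :: "nat \<Rightarrow> 'a::field set \<Rightarrow> (nat \<Rightarrow> 'a) set" where
  "cyc_code_ext n Z = (\<lambda>c. coeff c) ` {(gen_poly Z * f) mod (monom 1 n - 1) | f. True}"

definition cyc_code_sub :: "nat \<Rightarrow> nat \<Rightarrow> 'a::field set \<Rightarrow> (nat \<Rightarrow> 'a) set" where
  "cyc_code_sub q n Z = (\<lambda>c. coeff c) `
     {(gen_poly Z * f) mod (monom 1 n - 1) | f. \<forall>i. in_subfield q (coeff f i)}"

definition dual_code :: "nat \<Rightarrow> (nat \<Rightarrow> 'a::field) set \<Rightarrow> (nat \<Rightarrow> 'a) set" where
  "dual_code n D = {y. (\<forall>i\<ge>n. y i = 0) \<and> (\<forall>x\<in>D. (\<Sum>i<n. x i * y i) = 0)}"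

definition hdist :: "nat set \<Rightarrow> (nat \<Rightarrow> 'a) \<Rightarrow> (nat \<Rightarrow> 'a) \<Rightarrow> nat" where
  "hdist I x y = card {i\<in>I. x i \<noteq> y i}"

definition min_dist :: "nat \<Rightarrow> (nat \<Rightarrow> 'a) set \<Rightarrow> nat" where
  "min_dist n C = Inf {hdist {..<n} x y | x y. x \<in> C \<and> y \<in> C \<and> x \<noteq> y}"

definition puncture :: "nat set \<Rightarrow> (nat \<Rightarrow> 'a::zero) set \<Rightarrow> (nat \<Rightarrow> 'a) set" where
  "puncture S C = (\<lambda>c j. if j \<in> S then c j else 0) ` C"

text \<open>"the punctured code C|_S has minimum distance at least delta"
  (vacuous if C|_S has a single codeword, i.e. minimum over the empty set is infinite).\<close>
definition min_dist_ge :: "nat set \<Rightarrow> (nat \<Rightarrow> 'a) set \<Rightarrow> nat \<Rightarrow> bool" where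
  "min_dist_ge S C \<delta> \<longleftrightarrow> (\<forall>x\<in>C. \<forall>y\<in>C. x \<noteq> y \<longrightarrow> hdist S x y \<ge> \<delta>)"

definition has_locality :: "nat \<Rightarrow> (nat \<Rightarrow> 'a::zero) set \<Rightarrow> nat \<Rightarrow> nat \<Rightarrow> nat \<Rightarrow> bool" where
  "has_locality n C r \<delta> i \<longleftrightarrow>
     (\<exists>S. S \<subseteq> {..<n} \<and> i \<in> S \<and> card S \<le> r + \<delta> - 1 \<and> min_dist_ge S (puncture S C) \<delta>)"

definition is_LRC :: "nat \<Rightarrow> (nat \<Rightarrow> 'a::zero) set \<Rightarrow> nat \<Rightarrow> nat \<Rightarrow> bool" where
  "is_LRC n C r \<delta> \<longleftrightarrow> r \<ge> 1 \<and> \<delta> \<ge> 2 \<and> (\<forall>i<n. has_locality n C r \<delta> i)"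

definition is_optimal_LRC :: "nat \<Rightarrow> (nat \<Rightarrow> 'a::zero) set \<Rightarrow> nat \<Rightarrow> nat \<Rightarrow> nat \<Rightarrow> nat \<Rightarrow> bool" where
  "is_optimal_LRC n C k r \<delta> d \<longleftrightarrow> is_LRC n C r \<delta> \<and>
     int d = int n - int k - (\<lceil>real k / real r\<rceil> - 1) * (int \<delta> - 1) + 1"

end

theory Submission
  imports Defs
begin

lemma of_nat_mod_CHAR: "(of_nat a :: 'a::semiring_1) = of_nat (a mod CHAR('a))"
proof -
  have "(of_nat a :: 'a) = of_nat (CHAR('a) * (a div CHAR('a)) + a mod CHAR('a))" by simp
  also have "\<dots> = of_nat (a mod CHAR('a))" by (simp only: of_nat_add of_nat_mult of_nat_CHAR) simp
  finally show ?thesis .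
qed

lemma CHAR_dvd_card: "CHAR('a::{field,finite}) dvd card (UNIV :: 'a set)"
proof -
  define c where "c = CHAR('a)"
  have cpos: "c > 0" unfolding c_def by (rule finite_imp_CHAR_pos) simp
  define cos where "cos = (\<lambda>x::'a. (\<lambda>i. x + of_nat i) ` {..<c})"
  have inj: "inj_on (\<lambda>i. x + (of_nat i :: 'a)) {..<c}" for x
  proof (rule inj_onI)
    fix i j assume ij: "i \<in> {..<c}" "j \<in> {..<c}" "x + (of_nat i :: 'a) = x + of_nat j"
    hence e: "(of_nat i :: 'a) = of_nat j" by simp
    show "i = j"
    proof (rule ccontr)
      assume "i \<noteq> j"
      then consider "i < j" | "j < i" by linarith
      thus False
      proof cases
        case 1
        hence "(of_nat (j - i) :: 'a) = 0" using e by (simp add: of_nat_diff)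
        hence "c dvd j - i" unfolding c_def using of_nat_eq_0_iff_char_dvd by blast
        thus False using 1 ij(2) dvd_imp_le[of c "j-i"] by auto
      next
        case 2
        hence "(of_nat (i - j) :: 'a) = 0" using e by (simp add: of_nat_diff)
        hence "c dvd i - j" unfolding c_def using of_nat_eq_0_iff_char_dvd by blast
        thus False using 2 ij(1) dvd_imp_le[of c "i-j"] by auto
      qed
    qed
  qed
  have cardc: "card (cos x) = c" for x unfolding cos_def using card_image[OF inj] by simp
  have sub: "cos y \<subseteq> cos x" if "y \<in> cos x" for x y
  proof
    from that obtain i where i: "i < c" "y = x + of_nat i" by (auto simp: cos_def)
    fix z assume "z \<in> cos y"
    then obtain j where j: "z = y + of_nat j" by (auto simp: cos_def)
    have "z = x + of_nat (i + j)" using i j by (simp add: add.assoc)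
    also have "\<dots> = x + of_nat ((i + j) mod c)" using of_nat_mod_CHAR[of "i+j"] by (simp add: c_def)
    finally show "z \<in> cos x" using cpos by (auto simp: cos_def)
  qed
  have sym: "x \<in> cos y" if "y \<in> cos x" for x y
  proof -
    from that obtain i where i: "i < c" "y = x + of_nat i" by (auto simp: cos_def)
    have "y + of_nat (c - i) = x + of_nat (i + (c - i))" using i by (simp add: add.assoc)
    also have "\<dots> = x" using i by (simp add: c_def)
    finally have "x = y + of_nat ((c - i) mod c)" using of_nat_mod_CHAR[of "c - i", where 'a='a] by (simp add: c_def)
    thus ?thesis using cpos by (auto simp: cos_def)
  qed
  have self: "x \<in> cos x" for x using cpos by (force simp: cos_def)
  have "c * card (range cos) = card (\<Union>(range cos))"
  proof (rule card_partition)
    fix c1 c2 assume "c1 \<in> range cos" "c2 \<in> range cos" "c1 \<noteq> c2"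
    show "c1 \<inter> c2 = {}"
    proof -
      from \<open>c1 \<in> range cos\<close> \<open>c2 \<in> range cos\<close> obtain x y where xy: "c1 = cos x" "c2 = cos y" by auto
      show "c1 \<inter> c2 = {}"
      proof (rule ccontr)
        assume "c1 \<inter> c2 \<noteq> {}"
        then obtain z where "z \<in> cos x" "z \<in> cos y" using xy by auto
        hence "cos z = cos x" "cos z = cos y" using sub sym by (meson subset_antisym)+
        thus False using xy \<open>c1 \<noteq> c2\<close> by simp
      qed
    qed
  qed (auto simp: cardc)
  also have "\<Union>(range cos) = UNIV" using self by auto
  finally show ?thesis unfolding c_def[symmetric] by (metis dvd_triv_left)
qed

lemma char_eq:
  assumes "prime p" "card (UNIV :: 'a::{field,finite} set) = (p^e)^2"
  shows "CHAR('a) = p"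
proof -
  have pos: "CHAR('a) > 0" by (rule finite_imp_CHAR_pos) simp
  hence pr: "prime CHAR('a)" by (rule prime_CHAR_semidom)
  have "CHAR('a) dvd p ^ (e*2)" using CHAR_dvd_card[where 'a='a] assms(2) by (simp add: power_mult)
  hence "CHAR('a) dvd p" using pr prime_dvd_power by blast
  thus ?thesis using pr assms(1) by (simp add: primes_dvd_imp_eq)
qed

locale ffield =
  fixes q :: nat and p e :: nat and ty :: "'a::{field,finite} itself"
  assumes p_prime: "prime p" and e_pos: "e > 0" and q_eq: "q = p ^ e"
    and cardF: "card (UNIV :: 'a set) = q^2"
begin

lemma CHAR_p: "CHAR('a) = p"
  using char_eq[of p e] p_prime cardF q_eq by simp

lemma q_ge2: "q \<ge> 2"
proof -
  have "p \<ge> 2" using p_prime prime_ge_2_nat by blast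
  hence "p ^ e \<ge> p ^ 1" using e_pos by (intro power_increasing) auto
  thus ?thesis using \<open>p \<ge> 2\<close> q_eq by simp
qed

lemma q_pos: "q > 0" using q_ge2 by simp

lemma frob_add: "((x::'a) + y) ^ q = x ^ q + y ^ q"
  by (rule freshmans_dream'[where n = e]) (simp_all add: CHAR_p p_prime q_eq)

lemma frob_sum: "(sum (f :: _ \<Rightarrow> 'a) A) ^ q = sum (\<lambda>i. f i ^ q) A"
  by (rule freshmans_dream_sum'[where n = e]) (simp_all add: CHAR_p p_prime q_eq)

lemma frob_zero: "(0::'a) ^ q = 0" using q_pos by simp

lemma frob_neg: "(- (x::'a)) ^ q = - (x ^ q)"
proof -
  have "(x + - x) ^ q = 0" using frob_zero by simp
  hence "x ^ q + (-x) ^ q = 0" by (simp only: frob_add)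
  thus ?thesis by (simp add: eq_neg_iff_add_eq_0 add.commute)
qed

lemma frob_diff: "((x::'a) - y) ^ q = x ^ q - y ^ q"
  using frob_add[of x "-y"] frob_neg[of y] by simp

lemma frob_inj: "(x::'a) ^ q = y ^ q \<longleftrightarrow> x = y"
proof
  assume "x ^ q = y ^ q"
  hence "(x - y) ^ q = 0" by (simp add: frob_diff)
  thus "x = y" by simp
qed simp

lemma fermat: "(x::'a) ^ (q^2) = x"
proof (cases "x = 0")
  case False
  have "x * (\<Prod>y\<in>UNIV-{0}. x * y) = x * x ^ (card (UNIV :: 'a set) - 1) * \<Prod>(UNIV-{0})"
    by (simp add: prod.distrib mult_ac)
  also have "x * x ^ (card (UNIV :: 'a set) - 1) = x ^ Suc (card (UNIV :: 'a set) - 1)"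
    by (subst power_Suc) auto
  also have "Suc (card (UNIV :: 'a set) - 1) = card (UNIV :: 'a set)"
    using finite_UNIV_card_ge_0[where ?'a = 'a] by simp
  also have "(\<Prod>y\<in>UNIV-{0}. x * y) = (\<Prod>y\<in>UNIV-{0}. y)"
    by (rule prod.reindex_bij_witness[of _ "\<lambda>y. y / x" "\<lambda>y. x * y"]) (use False in auto)
  finally show ?thesis
    using cardF by simp
qed (use q_pos in auto)

definition Fq :: "'a set" where "Fq = {x. x ^ q = x}"

lemma Fq_iff: "x \<in> Fq \<longleftrightarrow> x ^ q = x" by (simp add: Fq_def)

lemma Fq_closed:
  "0 \<in> Fq" "1 \<in> Fq" "x \<in> Fq \<Longrightarrow> y \<in> Fq \<Longrightarrow> x + y \<in> Fq"
  "x \<in> Fq \<Longrightarrow> y \<in> Fq \<Longrightarrow> x - y \<in> Fq" "x \<in> Fq \<Longrightarrow> y \<in> Fq \<Longrightarrow> x * y \<in> Fq"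
  "x \<in> Fq \<Longrightarrow> - x \<in> Fq"
  by (auto simp: Fq_def frob_zero frob_add frob_diff frob_neg power_mult_distrib)

lemma Fq_sum: "(\<And>i. i \<in> A \<Longrightarrow> f i \<in> Fq) \<Longrightarrow> sum f A \<in> Fq"
  by (induction A rule: infinite_finite_induct) (auto intro: Fq_closed)

lemma card_roots_le:
  fixes P :: "'a poly"
  assumes "P \<noteq> 0" "degree P \<le> d"
  shows "card {x. poly P x = 0} \<le> d"
  using card_poly_roots_bound[OF assms(1)] assms(2) by linarith

lemma card_Fq_le: "card Fq \<le> q"
proof -
  let ?P = "monom (1::'a) q - [:0, 1:]"
  have "degree [:0, 1::'a:] < q" using q_ge2 by simp
  hence "coeff [:0, 1::'a:] q = 0" by (rule coeff_eq_0)
  hence cq: "coeff ?P q = 1" by (simp add: coeff_monom)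
  hence nz: "?P \<noteq> 0" by (metis coeff_0 zero_neq_one)
  have "degree ?P \<le> q"
    by (rule degree_le) (use q_pos in \<open>auto simp: coeff_monom coeff_pCons split: nat.splits\<close>)
  moreover have "Fq = {x. poly ?P x = 0}" by (auto simp: Fq_def poly_monom)
  ultimately show ?thesis using card_roots_le[OF nz] by simp
qed

lemma card_Fq: "card Fq = q"
proof -
  define \<phi> where "\<phi> = (\<lambda>x::'a. x ^ q - x)"
  let ?P = "monom (1::'a) q + [:0, 1:]"
  have "degree [:0, 1::'a:] < q" using q_ge2 by simp
  hence "coeff [:0, 1::'a:] q = 0" by (rule coeff_eq_0)
  hence cq: "coeff ?P q = 1" by (simp add: coeff_monom)
  hence nz: "?P \<noteq> 0" by (metis coeff_0 zero_neq_one)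
  have "degree ?P \<le> q"
    by (rule degree_le) (use q_pos in \<open>auto simp: coeff_monom coeff_pCons split: nat.splits\<close>)
  hence c1: "card {x. poly ?P x = 0} \<le> q" using card_roots_le[OF nz] by simp
  have im: "range \<phi> \<subseteq> {x. poly ?P x = 0}"
  proof
    fix y assume "y \<in> range \<phi>"
    then obtain x where y: "y = x ^ q - x" by (auto simp: \<phi>_def)
    have "y ^ q + y = x ^ (q*q) - x" by (simp add: y frob_diff power_mult[symmetric])
    also have "\<dots> = 0" using fermat[of x] by (simp add: power2_eq_square)
    finally show "y \<in> {x. poly ?P x = 0}" by (simp add: poly_monom)
  qed
  have c2: "card (range \<phi>) \<le> q"
    using card_mono[OF _ im] c1 by (meson finite order.trans)
  have fib: "card {x. \<phi> x = \<phi> x0} \<le> card Fq" for x0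
  proof -
    have "{x. \<phi> x = \<phi> x0} = (\<lambda>z. z + x0) ` Fq"
    proof (intro set_eqI iffI)
      fix x assume "x \<in> {x. \<phi> x = \<phi> x0}"
      hence "(x - x0) ^ q = x - x0" by (simp add: \<phi>_def frob_diff algebra_simps)
      thus "x \<in> (\<lambda>z. z + x0) ` Fq" by (intro image_eqI[of _ _ "x - x0"]) (auto simp: Fq_def)
    next
      fix x assume "x \<in> (\<lambda>z. z + x0) ` Fq"
      then obtain z where "z \<in> Fq" "x = z + x0" by auto
      thus "x \<in> {x. \<phi> x = \<phi> x0}" by (simp add: \<phi>_def Fq_def frob_add)
    qed
    thus ?thesis using card_image_le[of Fq "\<lambda>z. z + x0"] by simp
  qed
  have "UNIV = (\<Union>y\<in>range \<phi>. {x. \<phi> x = y})" by auto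
  hence "card (UNIV :: 'a set) \<le> (\<Sum>y\<in>range \<phi>. card {x. \<phi> x = y})"
    by (metis card_UN_le finite)
  also have "\<dots> \<le> (\<Sum>y\<in>range \<phi>. card Fq)"
    by (intro sum_mono) (use fib in auto)
  also have "\<dots> = card (range \<phi>) * card Fq" by simp
  also have "\<dots> \<le> q * card Fq" using c2 by simp
  finally have "q * q \<le> q * card Fq" using cardF by (simp add: power2_eq_square)
  hence "q \<le> card Fq" using q_pos by simp
  thus ?thesis using card_Fq_le by simp
qed

end


context ffield
begin

definition frobp :: "'a poly \<Rightarrow> 'a poly" where "frobp P = map_poly (\<lambda>x. x ^ q) P"

lemma coeff_frobp: "coeff (frobp P) i = (coeff P i) ^ q"
  unfolding frobp_def by (rule coeff_map_poly) (use q_pos in simp)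

lemma degree_frobp: "degree (frobp P) = degree P"
  unfolding frobp_def by (rule degree_map_poly) (use q_pos in simp)

lemma frobp_add: "frobp (P + Q) = frobp P + frobp Q"
  by (rule poly_eqI) (simp add: coeff_frobp frob_add)

lemma frobp_diff: "frobp (P - Q) = frobp P - frobp Q"
  by (rule poly_eqI) (simp add: coeff_frobp frob_diff)

lemma frobp_mult: "frobp (P * Q) = frobp P * frobp Q"
  by (rule poly_eqI) (simp add: coeff_frobp coeff_mult frob_sum power_mult_distrib)

lemma frobp_one: "frobp 1 = 1"
  by (rule poly_eqI) (simp add: coeff_frobp coeff_1 frob_zero)

lemma frobp_prod: "frobp (prod f A) = prod (\<lambda>i. frobp (f i)) A"
  by (induction A rule: infinite_finite_induct) (auto simp: frobp_one frobp_mult)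

lemma frobp_lin: "frobp [:a, b:] = [:a ^ q, b ^ q:]"
  by (rule poly_eqI) (simp add: coeff_frobp coeff_pCons frob_zero split: nat.splits)

definition inF :: "'a poly \<Rightarrow> bool" where "inF P \<longleftrightarrow> (\<forall>i. coeff P i \<in> Fq)"

lemma inF_frobp: "inF P \<longleftrightarrow> frobp P = P"
  by (auto simp: inF_def Fq_def poly_eq_iff coeff_frobp)

lemma inF_mult: "inF P \<Longrightarrow> inF Q \<Longrightarrow> inF (P * Q)"
  by (simp add: inF_frobp frobp_mult)

lemma inF_diff: "inF P \<Longrightarrow> inF Q \<Longrightarrow> inF (P - Q)"
  by (simp add: inF_frobp frobp_diff)

lemma inF_div_mod:
  assumes "inF P" "inF H" "H \<noteq> 0"
  shows "inF (P div H) \<and> inF (P mod H)"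
proof -
  define d r where "d = P div H" and "r = P mod H"
  have P: "P = d * H + r" by (simp add: d_def r_def)
  have fP: "frobp P = P" "frobp H = H" using assms by (simp_all add: inF_frobp)
  have P2: "P = frobp d * H + frobp r"
    using fP P by (metis frobp_add frobp_mult)
  have "P mod H = frobp r mod H" using P2 by (metis mod_mult_self3 add.commute)
  also have "\<dots> = frobp r"
  proof (cases "r = 0")
    case True thus ?thesis by (simp add: frobp_def)
  next
    case False
    hence "degree r < degree H" unfolding r_def using degree_mod_less[OF assms(3)] by blast
    thus ?thesis by (intro mod_poly_less) (simp add: degree_frobp)
  qed
  finally have rr: "frobp r = r" by (simp add: r_def)
  have "d * H = frobp d * H" using P P2 rr by (metis add_right_cancel)
  hence "frobp d = d" using assms(3) mult_right_cancel by metis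
  hence "inF d" "inF r" using rr by (simp_all add: inF_frobp)
  thus ?thesis by (simp add: d_def r_def)
qed

end

definition ev :: "nat \<Rightarrow> (nat \<Rightarrow> 'a::field) \<Rightarrow> 'a \<Rightarrow> 'a" where
  "ev n v \<beta> = (\<Sum>l<n. v l * \<beta> ^ l)"

definition vpoly :: "nat \<Rightarrow> (nat \<Rightarrow> 'a::field) \<Rightarrow> 'a poly" where
  "vpoly n v = (\<Sum>l<n. monom (v l) l)"

lemma coeff_vpoly: "coeff (vpoly n v) i = (if i < n then v i else 0)"
  by (simp add: vpoly_def coeff_sum coeff_monom)

lemma poly_vpoly: "poly (vpoly n v) x = ev n v x"
  by (simp add: vpoly_def ev_def poly_sum poly_monom)

lemma degree_vpoly: "n > 0 \<Longrightarrow> degree (vpoly n v) < n"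
proof -
  assume "n > 0"
  have "degree (vpoly n v) \<le> n - 1" by (rule degree_le) (auto simp: coeff_vpoly)
  thus ?thesis using \<open>n > 0\<close> by simp
qed

lemma poly_as_ev:
  assumes "degree P < n"
  shows "poly P x = ev n (coeff P) x"
proof -
  have "poly P x = (\<Sum>i\<le>degree P. coeff P i * x ^ i)" by (rule poly_altdef)
  also have "\<dots> = (\<Sum>i<n. coeff P i * x ^ i)"
    by (rule sum.mono_neutral_left) (use assms in \<open>auto simp: coeff_eq_0\<close>)
  finally show ?thesis by (simp add: ev_def)
qed

lemma gen_poly_insert: "finite Z \<Longrightarrow> \<beta> \<notin> Z \<Longrightarrow> gen_poly (insert \<beta> Z) = [:-\<beta>, 1:] * gen_poly Z"
  by (simp add: gen_poly_def)

lemma gen_poly_dvd: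
  fixes P :: "'a::field poly"
  assumes "finite Z" "\<forall>\<beta>\<in>Z. poly P \<beta> = 0"
  shows "gen_poly Z dvd P"
  using assms
proof (induction Z arbitrary: P rule: finite_induct)
  case empty thus ?case by (simp add: gen_poly_def)
next
  case (insert \<beta> Z)
  have "[:-\<beta>, 1:] dvd P" using insert.prems poly_eq_0_iff_dvd by blast
  then obtain P' where P': "P = [:-\<beta>, 1:] * P'" by (elim dvdE)
  have "\<forall>\<gamma>\<in>Z. poly P' \<gamma> = 0"
  proof
    fix \<gamma> assume "\<gamma> \<in> Z"
    hence "\<gamma> \<noteq> \<beta>" "poly P \<gamma> = 0" using insert by auto
    thus "poly P' \<gamma> = 0" using P' by simp
  qed
  hence "gen_poly Z dvd P'" using insert.IH by blast
  hence "[:-\<beta>, 1:] * gen_poly Z dvd [:-\<beta>, 1:] * P'" by (rule mult_dvd_mono[OF dvd_refl])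
  thus ?case unfolding gen_poly_insert[OF insert.hyps] P' .
qed

lemma poly_gen_poly: "finite Z \<Longrightarrow> \<beta> \<in> Z \<Longrightarrow> poly (gen_poly Z) \<beta> = 0"
proof -
  assume a: "finite Z" "\<beta> \<in> Z"
  have "poly (gen_poly Z) \<beta> = (\<Prod>\<gamma>\<in>Z. poly [:-\<gamma>, 1:] \<beta>)" by (simp only: gen_poly_def poly_prod)
  also have "\<dots> = 0" using a by (intro prod_zero) auto
  finally show ?thesis .
qed

lemma gen_poly_nz: "gen_poly (Z::'a::field set) \<noteq> 0"
  unfolding gen_poly_def by (cases "finite Z") (simp_all add: prod_zero_iff)

lemma degree_gen_poly: "finite Z \<Longrightarrow> degree (gen_poly (Z::'a::field set)) = card Z"
  by (simp add: gen_poly_def degree_prod_eq_sum_degree)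

lemma degree_xn1: "n > 0 \<Longrightarrow> degree (monom (1::'a::field) n - 1) = n"
proof -
  assume "n > 0"
  have "monom (1::'a) n - 1 = monom 1 n + (- 1)" by simp
  also have "degree \<dots> = degree (monom (1::'a) n)"
    by (rule degree_add_eq_left) (use \<open>n > 0\<close> in \<open>simp add: degree_monom_eq\<close>)
  finally show ?thesis by (simp add: degree_monom_eq)
qed

lemma xn1_nz: "n > 0 \<Longrightarrow> monom (1::'a::field) n - 1 \<noteq> 0"
proof
  assume "n > 0" "monom (1::'a) n - 1 = 0"
  hence "degree (monom (1::'a) n - 1) = 0" by simp
  thus False using degree_xn1[OF \<open>n > 0\<close>, where 'a='a] \<open>n > 0\<close> by linarith
qed

lemma poly_xn1: "\<beta> ^ n = 1 \<Longrightarrow> poly (monom (1::'a::field) n - 1) \<beta> = 0"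
  by (simp add: poly_monom)

lemma cyc_code_ext_char:
  fixes Z :: "'a::field set"
  assumes n: "n > 0" and fin: "finite Z" and roots: "\<forall>\<beta>\<in>Z. \<beta> ^ n = 1"
  shows "cyc_code_ext n Z = {v. (\<forall>l\<ge>n. v l = 0) \<and> (\<forall>\<beta>\<in>Z. ev n v \<beta> = 0)}"
proof (intro set_eqI iffI)
  let ?N = "monom (1::'a) n - 1"
  fix v assume "v \<in> cyc_code_ext n Z"
  then obtain f where v: "v = coeff ((gen_poly Z * f) mod ?N)" by (auto simp: cyc_code_ext_def)
  define P where "P = (gen_poly Z * f) mod ?N"
  have dm: "P = 0 \<or> degree P < degree ?N"
    unfolding P_def by (rule degree_mod_less[OF xn1_nz[OF n]])
  have deg: "degree P < n" using dm degree_xn1[OF n, where 'a='a] n by auto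
  have "v l = 0" if "l \<ge> n" for l using deg that by (simp add: v P_def[symmetric] coeff_eq_0)
  moreover have "ev n v \<beta> = 0" if "\<beta> \<in> Z" for \<beta>
  proof -
    have "ev n v \<beta> = poly P \<beta>" using poly_as_ev[OF deg] by (simp add: v P_def)
    also have "P = gen_poly Z * f - ((gen_poly Z * f) div ?N) * ?N"
      by (simp only: P_def minus_div_mult_eq_mod)
    also have "poly \<dots> \<beta> = 0" using poly_gen_poly[OF fin that] poly_xn1[of \<beta> n] roots that by simp
    finally show ?thesis .
  qed
  ultimately show "v \<in> {v. (\<forall>l\<ge>n. v l = 0) \<and> (\<forall>\<beta>\<in>Z. ev n v \<beta> = 0)}" by auto
next
  let ?N = "monom (1::'a) n - 1"
  fix v assume v: "v \<in> {v. (\<forall>l\<ge>n. v l = 0) \<and> (\<forall>\<beta>\<in>Z. ev n v \<beta> = 0)}"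
  define P where "P = vpoly n v"
  have cv: "coeff P = v" using v by (auto simp: P_def coeff_vpoly fun_eq_iff)
  have "gen_poly Z dvd P" using v by (intro gen_poly_dvd fin) (simp add: P_def poly_vpoly)
  then obtain f where f: "P = gen_poly Z * f" by (elim dvdE)
  have "P mod ?N = P" using degree_vpoly[OF n] degree_xn1[OF n, where 'a='a] by (intro mod_poly_less) (simp add: P_def)
  hence "v = coeff ((gen_poly Z * f) mod ?N)" using f cv by simp
  thus "v \<in> cyc_code_ext n Z" unfolding cyc_code_ext_def by blast
qed

lemma vander:
  fixes u \<gamma> :: "nat \<Rightarrow> 'a::field"
  assumes fin: "finite T" and inj: "inj_on \<gamma> T" and card: "card T \<le> N"
    and sums: "\<forall>j<N. (\<Sum>l\<in>T. u l * \<gamma> l ^ j) = 0" and l0: "l0 \<in> T"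
  shows "u l0 = 0"
proof -
  define P where "P = (\<Prod>l\<in>T-{l0}. [:-\<gamma> l, 1:])"
  have degP: "degree P = card T - 1"
    using fin l0 by (simp add: P_def degree_prod_eq_sum_degree)
  have "card T \<ge> 1" using fin l0 by (metis One_nat_def Suc_leI card_gt_0_iff empty_iff)
  hence dP: "degree P < N" using degP card by linarith
  have "(\<Sum>l\<in>T. u l * poly P (\<gamma> l)) = (\<Sum>l\<in>T. u l * (\<Sum>j<N. coeff P j * \<gamma> l ^ j))"
    using poly_as_ev[OF dP] by (simp add: ev_def)
  also have "\<dots> = (\<Sum>j<N. coeff P j * (\<Sum>l\<in>T. u l * \<gamma> l ^ j))"
  proof -
    have "(\<Sum>l\<in>T. u l * (\<Sum>j<N. coeff P j * \<gamma> l ^ j)) = (\<Sum>l\<in>T. \<Sum>j<N. coeff P j * (u l * \<gamma> l ^ j))"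
      by (rule sum.cong[OF refl]) (simp add: sum_distrib_left mult.left_commute)
    also have "\<dots> = (\<Sum>j<N. \<Sum>l\<in>T. coeff P j * (u l * \<gamma> l ^ j))" by (rule sum.swap)
    also have "\<dots> = (\<Sum>j<N. coeff P j * (\<Sum>l\<in>T. u l * \<gamma> l ^ j))" by (simp add: sum_distrib_left)
    finally show ?thesis .
  qed
  also have "\<dots> = 0" using sums by simp
  finally have s0: "(\<Sum>l\<in>T. u l * poly P (\<gamma> l)) = 0" .
  have "(\<Sum>l\<in>T. u l * poly P (\<gamma> l)) = u l0 * poly P (\<gamma> l0) + (\<Sum>l\<in>T-{l0}. u l * poly P (\<gamma> l))"
    using fin l0 by (simp add: sum.remove)
  also have "(\<Sum>l\<in>T-{l0}. u l * poly P (\<gamma> l)) = 0"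
  proof (rule sum.neutral, rule ballI)
    fix l assume "l \<in> T - {l0}"
    hence "poly P (\<gamma> l) = 0" using fin by (simp add: P_def poly_prod) (metis DiffI prod_zero_iff right_minus_eq singletonD finite_Diff)
    thus "u l * poly P (\<gamma> l) = 0" by simp
  qed
  finally have "u l0 * poly P (\<gamma> l0) = 0" using s0 by simp
  moreover have "poly P (\<gamma> l0) \<noteq> 0"
  proof -
    have "\<forall>l\<in>T-{l0}. \<gamma> l0 - \<gamma> l \<noteq> 0" using inj l0 by (auto dest: inj_onD)
    thus ?thesis using fin by (simp add: P_def poly_prod)
  qed
  ultimately show ?thesis by simp
qed


locale root =
  fixes \<alpha> :: "'a::field" and n :: nat
  assumes npos: "n > 0" and alpha_n: "\<alpha> ^ n = 1"
    and prim: "\<forall>j. 0 < j \<and> j < n \<longrightarrow> \<alpha> ^ j \<noteq> 1"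
begin

abbreviation R where "R \<equiv> rpow \<alpha> n"

lemma pow_mod_n: "\<alpha> ^ k = \<alpha> ^ (k mod n)"
proof -
  have "\<alpha> ^ k = \<alpha> ^ (n * (k div n) + k mod n)" by simp
  also have "\<dots> = (\<alpha> ^ n) ^ (k div n) * \<alpha> ^ (k mod n)" by (simp only: power_add power_mult)
  finally show ?thesis by (simp add: alpha_n)
qed

lemma rpow_nat: "R (int k) = \<alpha> ^ k"
  by (simp add: rpow_def pow_mod_n[of k] zmod_int[symmetric])

lemma rpow_eq: "x mod int n = y mod int n \<Longrightarrow> R x = R y"
  by (simp add: rpow_def)

lemma rpow_def': "R x = \<alpha> ^ nat (x mod int n)" by (simp add: rpow_def)

lemma rpow_add: "R x * R y = R (x + y)"
proof -
  have "R x * R y = \<alpha> ^ (nat (x mod int n) + nat (y mod int n))"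
    by (simp add: rpow_def power_add)
  also have "\<dots> = R (int (nat (x mod int n) + nat (y mod int n)))" by (rule rpow_nat[symmetric])
  also have "\<dots> = R (x + y)"
  proof (rule rpow_eq)
    have "int (nat (x mod int n) + nat (y mod int n)) = x mod int n + y mod int n" using npos by simp
    thus "int (nat (x mod int n) + nat (y mod int n)) mod int n = (x + y) mod int n"
      by (simp add: mod_add_eq)
  qed
  finally show ?thesis .
qed

lemma rpow_zero: "R 0 = 1" by (simp add: rpow_def)

lemma rpow_pow: "R x ^ l = R (x * int l)"
  by (induction l) (simp_all add: rpow_zero rpow_add[symmetric] algebra_simps)

lemma rpow_nz: "R x \<noteq> 0"
proof
  assume "R x = 0"
  hence "R x * R (-x) = 0" by simp
  thus False by (simp add: rpow_add rpow_zero)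
qed

lemma rpow_one_iff: "R x = 1 \<longleftrightarrow> int n dvd x"
proof
  assume "R x = 1"
  hence a: "\<alpha> ^ nat (x mod int n) = 1" by (simp add: rpow_def)
  have "nat (x mod int n) < n" using npos by (simp add: nat_less_iff)
  hence "nat (x mod int n) = 0" using prim a by (metis neq0_conv)
  hence "x mod int n = 0" using npos by (metis Euclidean_Rings.pos_mod_sign nat_0_iff of_nat_0_less_iff order_antisym_conv)
  thus "int n dvd x" by (simp add: dvd_eq_mod_eq_0)
next
  assume "int n dvd x"
  hence "x mod int n = 0" by simp
  thus "R x = 1" by (simp add: rpow_def)
qed

lemma rpow_inj: "R x = R y \<longleftrightarrow> int n dvd x - y"
proof -
  have "R x = R y \<longleftrightarrow> R x * R (-y) = R y * R (-y)"
    using rpow_nz by (metis mult_right_cancel)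
  also have "\<dots> \<longleftrightarrow> R (x - y) = 1" by (simp add: rpow_add rpow_zero)
  finally show ?thesis by (simp add: rpow_one_iff)
qed

lemma rpow_root: "R x ^ n = 1"
  by (simp add: rpow_pow rpow_one_iff)

lemma ev_rpow: "ev n v (R x) = (\<Sum>l<n. v l * R (x * int l))"
  by (simp add: ev_def rpow_pow)

lemma bch:
  fixes v :: "nat \<Rightarrow> 'a" and z0 b' :: int
  assumes zero: "\<forall>l\<ge>n. v l = 0" and cop: "coprime b' (int n)"
    and evs: "\<forall>j<N. ev n v (R (z0 + int j * b')) = 0"
    and wt: "card {l. l < n \<and> v l \<noteq> 0} \<le> N"
  shows "v l = 0"
proof (rule ccontr)
  assume vl: "v l \<noteq> 0"
  define T where "T = {l. l < n \<and> v l \<noteq> 0}"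
  have lT: "l \<in> T" using vl zero by (auto simp: T_def) (meson not_le)
  have finT: "finite T" by (simp add: T_def)
  define \<gamma> where "\<gamma> = (\<lambda>l::nat. R (b' * int l))"
  define u where "u = (\<lambda>l::nat. v l * R (z0 * int l))"
  have inj: "inj_on \<gamma> T"
  proof (rule inj_onI)
    fix l1 l2 assume "l1 \<in> T" "l2 \<in> T" "\<gamma> l1 = \<gamma> l2"
    hence l0: "l1 < n" "l2 < n" "int n dvd b' * int l1 - b' * int l2"
      by (auto simp: T_def \<gamma>_def rpow_inj)
    have "b' * int l1 - b' * int l2 = b' * (int l1 - int l2)" by (simp add: right_diff_distrib)
    hence l: "l1 < n" "l2 < n" "int n dvd b' * (int l1 - int l2)" using l0 by simp_all
    hence "int n dvd int l1 - int l2" using cop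
      by (metis coprime_commute coprime_dvd_mult_right_iff)
    then obtain k where k: "int l1 - int l2 = int n * k" by (elim dvdE)
    have "k = 0"
    proof (rule ccontr)
      assume "k \<noteq> 0"
      then consider "k \<ge> 1" | "k \<le> -1" by linarith
      thus False
      proof cases
        case 1
        hence "int n * 1 \<le> int n * k" by (intro mult_left_mono) simp_all
        thus False using l(1,2) k by linarith
      next
        case 2
        hence "int n * k \<le> int n * (-1)" by (intro mult_left_mono) simp_all
        thus False using l(1,2) k by linarith
      qed
    qed
    thus "l1 = l2" using k by simp
  qed
  have sums: "\<forall>j<N. (\<Sum>l\<in>T. u l * \<gamma> l ^ j) = 0"
  proof (intro allI impI)
    fix j assume "j < N"
    have "(\<Sum>l\<in>T. u l * \<gamma> l ^ j) = (\<Sum>l\<in>T. v l * R ((z0 + int j * b') * int l))"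
    proof (rule sum.cong[OF refl])
      fix l assume "l \<in> T"
      have "R (z0 * int l) * R (b' * int l) ^ j = R (z0 * int l + b' * int l * int j)"
        by (simp only: rpow_pow rpow_add)
      also have "\<dots> = R ((z0 + int j * b') * int l)"
        by (rule arg_cong[where f=R]) (simp add: algebra_simps)
      finally show "u l * \<gamma> l ^ j = v l * R ((z0 + int j * b') * int l)"
        by (simp add: u_def \<gamma>_def mult.assoc)
    qed
    also have "\<dots> = (\<Sum>l<n. v l * R ((z0 + int j * b') * int l))"
      by (rule sum.mono_neutral_left) (auto simp: T_def)
    also have "\<dots> = 0" using evs \<open>j < N\<close> by (simp add: ev_rpow)
    finally show "(\<Sum>l\<in>T. u l * \<gamma> l ^ j) = 0" .
  qed
  have "u l = 0" by (rule vander[OF finT inj _ sums lT]) (use wt in \<open>simp add: T_def\<close>)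
  thus False using vl rpow_nz by (simp add: u_def)
qed

end


locale lincode =
  fixes C :: "(nat \<Rightarrow> 'a::ab_group_add) set" and F :: "'a set" and n Q :: nat
  assumes finC: "finite C" and finF: "finite F" and cardF: "card F = Q"
    and zeroC: "(\<lambda>_. 0) \<in> C" and diffC: "\<And>x y. x \<in> C \<Longrightarrow> y \<in> C \<Longrightarrow> (\<lambda>l. x l - y l) \<in> C"
    and valsC: "\<And>x l. x \<in> C \<Longrightarrow> x l \<in> F"
    and suppC: "\<And>x l. x \<in> C \<Longrightarrow> l \<ge> n \<Longrightarrow> x l = 0"
begin

definition K :: "nat set \<Rightarrow> (nat \<Rightarrow> 'a) set" where "K X = {c \<in> C. \<forall>l\<in>X. c l = 0}"

lemma K_sub: "K X \<subseteq> C" by (auto simp: K_def)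
lemma finK: "finite (K X)" using finC by (auto simp: K_def)
lemma K_mono: "X \<subseteq> Y \<Longrightarrow> K Y \<subseteq> K X" by (auto simp: K_def)
lemma zeroK: "(\<lambda>_. 0) \<in> K X" using zeroC by (auto simp: K_def)

lemma K_step: "card (K X) \<le> card (K (insert a X)) * Q"
proof -
  let ?f = "\<lambda>c. c a"
  have fib: "card {c \<in> K X. c a = v} \<le> card (K (insert a X))" for v
  proof (cases "{c \<in> K X. c a = v} = {}")
    case True thus ?thesis by (simp only: True card.empty)
  next
    case False
    then obtain c0 where c0: "c0 \<in> K X" "c0 a = v" by auto
    have "inj_on (\<lambda>c l. c l - c0 l) {c \<in> K X. c a = v}" by (rule inj_onI) (simp add: fun_eq_iff)
    moreover have "(\<lambda>c l. c l - c0 l) ` {c \<in> K X. c a = v} \<subseteq> K (insert a X)"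
      using c0 by (auto simp: K_def intro: diffC)
    ultimately show ?thesis using finK by (rule card_inj_on_le)
  qed
  have eq: "K X = (\<Union>v\<in>?f ` K X. {c \<in> K X. c a = v})" by auto
  have "card (\<Union>v\<in>?f ` K X. {c \<in> K X. c a = v}) \<le> (\<Sum>v\<in>?f ` K X. card {c \<in> K X. c a = v})"
    by (rule card_UN_le) (use finK in simp)
  hence "card (K X) \<le> (\<Sum>v\<in>?f ` K X. card {c \<in> K X. c a = v})" using eq by simp
  also have "\<dots> \<le> (\<Sum>v\<in>?f ` K X. card (K (insert a X)))" by (intro sum_mono fib)
  also have "\<dots> = card (?f ` K X) * card (K (insert a X))" by simp
  also have "card (?f ` K X) \<le> Q"
  proof -
    have "?f ` K X \<subseteq> F" using K_sub valsC by blast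
    thus ?thesis using card_mono[OF finF] cardF by blast
  qed
  hence "card (?f ` K X) * card (K (insert a X)) \<le> Q * card (K (insert a X))" by simp
  finally show ?thesis by (simp add: mult.commute)
qed

lemma K_steps: "finite Y \<Longrightarrow> card (K X) \<le> card (K (X \<union> Y)) * Q ^ card (Y - X)"
proof (induction Y rule: finite_induct)
  case empty thus ?case by simp
next
  case (insert a Y)
  show ?case
  proof (cases "a \<in> X")
    case True
    hence "X \<union> insert a Y = X \<union> Y" "insert a Y - X = Y - X" by auto
    thus ?thesis using insert.IH by simp
  next
    case False
    have cY: "card (insert a Y - X) = Suc (card (Y - X))"
      using False insert.hyps by (simp add: insert_Diff_if)
    have "card (K X) \<le> card (K (X \<union> Y)) * Q ^ card (Y - X)" by (rule insert.IH)
    also have "card (K (X \<union> Y)) \<le> card (K (insert a (X \<union> Y))) * Q" by (rule K_step)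
    hence "card (K (X \<union> Y)) * Q ^ card (Y - X) \<le> card (K (insert a (X \<union> Y))) * Q * Q ^ card (Y - X)"
      by (rule mult_right_mono) simp
    finally show ?thesis using cY by (simp add: mult.assoc)
  qed
qed

lemma K_nonzero:
  assumes "2 \<le> card (K X)"
  shows "\<exists>c\<in>K X. c \<noteq> (\<lambda>_. 0)"
proof (rule ccontr)
  assume "\<not> ?thesis"
  hence "K X \<subseteq> {\<lambda>_. 0}" by auto
  hence "card (K X) \<le> 1" using card_mono[of "{\<lambda>_. 0}" "K X"] by simp
  thus False using assms by simp
qed

lemma pow_bound:
  fixes M Q' a b :: nat
  assumes "Q' ^ a \<le> M * Q' ^ b" "b < a" "Q' \<ge> 1"
  shows "Q' \<le> M"
proof (rule ccontr)
  assume "\<not> Q' \<le> M"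
  hence "M * Q' ^ b < Q' * Q' ^ b" using assms(3) by (intro mult_strict_right_mono) auto
  also have "\<dots> = Q' ^ Suc b" by simp
  also have "\<dots> \<le> Q' ^ a" using assms(2,3) by (intro power_increasing) auto
  finally show False using assms(1) by simp
qed

lemma lrc_bound:
  fixes r \<delta> s k :: nat
  assumes Q2: "Q \<ge> 2" and cardC: "card C = Q ^ k"
    and loc: "\<And>a. a < n \<Longrightarrow> \<exists>S. S \<subseteq> {..<n} \<and> a \<in> S \<and> card S \<le> r + \<delta> - 1 \<and>
                (\<forall>c\<in>C. card {l\<in>S. c l \<noteq> 0} < \<delta> \<longrightarrow> (\<forall>l\<in>S. c l = 0))"
    and d1: "\<delta> \<ge> 1" and sr: "s * r < k" and Gn: "k - 1 + s * (\<delta> - 1) \<le> n"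
  shows "\<exists>c\<in>C. c \<noteq> (\<lambda>_. 0) \<and> card {l. l < n \<and> c l \<noteq> 0} \<le> n - (k - 1 + s * (\<delta> - 1))"
proof -
  have KC: "K {} = C" by (simp add: K_def)
  have inv: "j \<le> s \<Longrightarrow> \<exists>X. X \<subseteq> {..<n} \<and> card X \<ge> j * (\<delta> - 1) \<and>
       Q ^ k \<le> card (K X) * Q ^ (card X - j * (\<delta> - 1)) \<and> Q ^ k \<le> card (K X) * Q ^ (j * r)" for j
  proof (induction j)
    case 0
    show ?case by (intro exI[of _ "{}"]) (simp add: KC cardC)
  next
    case (Suc j)
    then obtain X where X: "X \<subseteq> {..<n}" "card X \<ge> j * (\<delta> - 1)"
      "Q ^ k \<le> card (K X) * Q ^ (card X - j * (\<delta> - 1))" "Q ^ k \<le> card (K X) * Q ^ (j * r)"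
      by auto
    have finX: "finite X" using X(1) finite_subset by blast
    have "j * r < k" using Suc.prems sr mult_le_mono1[of j s r] by linarith
    hence "Q \<le> card (K X)" using pow_bound[OF X(4)] Q2 by simp
    hence "2 \<le> card (K X)" using Q2 by linarith
    then obtain c where c: "c \<in> K X" "c \<noteq> (\<lambda>_. 0)" using K_nonzero by blast
    then obtain a where a: "c a \<noteq> 0" by (meson ext)
    have an: "a < n" using a c(1) suppC K_sub by (meson in_mono not_le)
    obtain S where S: "S \<subseteq> {..<n}" "a \<in> S" "card S \<le> r + \<delta> - 1"
      "\<forall>c\<in>C. card {l\<in>S. c l \<noteq> 0} < \<delta> \<longrightarrow> (\<forall>l\<in>S. c l = 0)"
      using loc[OF an] by blast
    have finS: "finite S" using S(1) finite_subset by blast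
    have cSX: "card (S - X) \<ge> \<delta> - 1"
    proof (rule ccontr)
      assume "\<not> ?thesis"
      hence lt: "card (S - X) < \<delta>" by linarith
      have "{l\<in>S. c l \<noteq> 0} \<subseteq> S - X" using c(1) by (auto simp: K_def)
      hence "card {l\<in>S. c l \<noteq> 0} < \<delta>" using card_mono[of "S - X"] finS lt
        by (meson finite_Diff le_less_trans)
      hence "\<forall>l\<in>S. c l = 0" using S(4) c(1) K_sub by blast
      thus False using a S(2) by blast
    qed
    obtain T where T: "T \<subseteq> S - X" "card T = card (S - X) - (\<delta> - 1)" "finite T"
      using obtain_subset_with_card_n[of "card (S - X) - (\<delta> - 1)" "S - X"] by auto
    define X' where "X' = X \<union> S"
    have KT: "K (X \<union> T) \<subseteq> K X'"
    proof
      fix c' assume c': "c' \<in> K (X \<union> T)"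
      have "{l\<in>S. c' l \<noteq> 0} \<subseteq> (S - X) - T" using c' by (auto simp: K_def)
      hence "card {l\<in>S. c' l \<noteq> 0} \<le> card ((S - X) - T)" using finS by (intro card_mono) auto
      also have "card ((S - X) - T) = card (S - X) - card T"
        using T by (intro card_Diff_subset) auto
      also have "\<dots> = \<delta> - 1" using T(2) cSX by simp
      finally have "card {l\<in>S. c' l \<noteq> 0} < \<delta>" using d1 by linarith
      hence "\<forall>l\<in>S. c' l = 0" using S(4) c' K_sub by blast
      thus "c' \<in> K X'" using c' by (auto simp: K_def X'_def)
    qed
    have cX': "card X' = card X + card (S - X)"
    proof -
      have "X \<union> S = X \<union> (S - X)" by auto
      moreover have "card (X \<union> (S - X)) = card X + card (S - X)"
        using finX finS by (intro card_Un_disjoint) auto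
      ultimately show ?thesis unfolding X'_def by simp
    qed
    have TX: "T - X = T" using T(1) by auto
    have step: "card (K X) \<le> card (K X') * Q ^ card T"
    proof -
      have "card (K X) \<le> card (K (X \<union> T)) * Q ^ card (T - X)" by (rule K_steps[OF T(3)])
      also have "\<dots> \<le> card (K X') * Q ^ card T"
        using TX card_mono[OF finK KT] by simp
      finally show ?thesis .
    qed
    have cT: "card T \<le> r"
    proof -
      have "card (S - X) \<le> card S" using finS by (simp add: card_mono)
      thus ?thesis using T(2) S(3) by linarith
    qed
    show ?case
    proof (intro exI[of _ X'] conjI)
      show "X' \<subseteq> {..<n}" using X(1) S(1) by (simp add: X'_def)
      show "Suc j * (\<delta> - 1) \<le> card X'" using cX' X(2) cSX by simp
      have "Q ^ k \<le> card (K X) * Q ^ (card X - j * (\<delta> - 1))" by (rule X(3))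
      also have "\<dots> \<le> card (K X') * Q ^ card T * Q ^ (card X - j * (\<delta> - 1))"
        using step by (rule mult_right_mono) simp
      also have "\<dots> = card (K X') * Q ^ (card T + (card X - j * (\<delta> - 1)))"
        by (simp add: power_add mult.assoc)
      also have "card T + (card X - j * (\<delta> - 1)) = card X' - Suc j * (\<delta> - 1)"
        using T(2) cX' cSX X(2) by (simp add: add.commute)
      finally show "Q ^ k \<le> card (K X') * Q ^ (card X' - Suc j * (\<delta> - 1))" .
      have "Q ^ k \<le> card (K X) * Q ^ (j * r)" by (rule X(4))
      also have "\<dots> \<le> card (K X') * Q ^ card T * Q ^ (j * r)"
        using step by (rule mult_right_mono) simp
      also have "\<dots> = card (K X') * Q ^ (card T + j * r)"
        by (simp add: power_add mult.assoc)
      also have "\<dots> \<le> card (K X') * Q ^ (Suc j * r)"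
        using cT Q2 by (intro mult_left_mono power_increasing) auto
      finally show "Q ^ k \<le> card (K X') * Q ^ (Suc j * r)" .
    qed
  qed
  obtain X where X: "X \<subseteq> {..<n}" "card X \<ge> s * (\<delta> - 1)"
      "Q ^ k \<le> card (K X) * Q ^ (card X - s * (\<delta> - 1))" "Q ^ k \<le> card (K X) * Q ^ (s * r)"
    using inv[of s] by auto
  have finX: "finite X" using X(1) finite_subset by blast
  define G where "G = k - 1 + s * (\<delta> - 1)"
  have "\<exists>X'. X' \<subseteq> {..<n} \<and> card X' \<ge> G \<and> Q \<le> card (K X')"
  proof (cases "card X \<ge> G")
    case True
    have q1: "Q \<ge> 1" using Q2 by linarith
    have "Q \<le> card (K X)" by (rule pow_bound[OF X(4) sr q1])
    thus ?thesis using True X(1) by blast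
  next
    case False
    have "G - card X \<le> card ({..<n} - X)"
    proof -
      have "card ({..<n} - X) = n - card X" using X(1) finX by (simp add: card_Diff_subset)
      thus ?thesis using Gn by (simp add: G_def)
    qed
    then obtain Y where Y: "Y \<subseteq> {..<n} - X" "card Y = G - card X" "finite Y"
      by (rule obtain_subset_with_card_n)
    have YX: "Y - X = Y" using Y(1) by auto
    have "Q ^ k \<le> card (K X) * Q ^ (card X - s * (\<delta> - 1))" by (rule X(3))
    also have "\<dots> \<le> card (K (X \<union> Y)) * Q ^ card Y * Q ^ (card X - s * (\<delta> - 1))"
    proof -
      have "card (K X) \<le> card (K (X \<union> Y)) * Q ^ card Y" using K_steps[OF Y(3), of X] YX by simp
      thus ?thesis by (rule mult_right_mono) simp
    qed
    also have "\<dots> = card (K (X \<union> Y)) * Q ^ (card Y + (card X - s * (\<delta> - 1)))"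
      by (simp add: power_add mult.assoc)
    also have "card Y + (card X - s * (\<delta> - 1)) = k - 1"
      using Y(2) False X(2) unfolding G_def by linarith
    finally have qk: "Q ^ k \<le> card (K (X \<union> Y)) * Q ^ (k - 1)" .
    have k1: "k - 1 < k" using sr by linarith
    have q1: "Q \<ge> 1" using Q2 by linarith
    have "Q \<le> card (K (X \<union> Y))" by (rule pow_bound[OF qk k1 q1])
    moreover have "card (X \<union> Y) \<ge> G"
    proof -
      have "X \<inter> Y = {}" using Y(1) by auto
      hence "card (X \<union> Y) = card X + card Y" using finX Y(3) by (simp add: card_Un_disjoint)
      thus ?thesis using Y(2) False by linarith
    qed
    moreover have "X \<union> Y \<subseteq> {..<n}" using X(1) Y(1) by auto
    ultimately show ?thesis by blast
  qed
  then obtain X' where X': "X' \<subseteq> {..<n}" "card X' \<ge> G" "Q \<le> card (K X')" by blast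
  hence "2 \<le> card (K X')" using Q2 by linarith
  then obtain c where c: "c \<in> K X'" "c \<noteq> (\<lambda>_. 0)" using K_nonzero by blast
  have "{l. l < n \<and> c l \<noteq> 0} \<subseteq> {..<n} - X'" using c(1) by (auto simp: K_def)
  hence "card {l. l < n \<and> c l \<noteq> 0} \<le> card ({..<n} - X')" by (intro card_mono) auto
  also have "\<dots> = n - card X'" using X'(1) finite_subset[OF X'(1)] by (simp add: card_Diff_subset)
  also have "\<dots> \<le> n - G" using X'(2) by simp
  finally show ?thesis using c K_sub G_def by blast
qed

end


locale main = ffield q p e ty + root \<alpha> n
  for q p e :: nat and ty :: "'a::{field,finite} itself" and \<alpha> :: 'a and n :: nat +
  fixes b s m t \<delta> :: nat and i :: "nat \<Rightarrow> int" and A B :: "'a set"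
  assumes n_dvd: "n dvd q + 1"
    and delta: "\<delta> \<ge> 2" "even \<delta>"
    and pos: "b > 0" "s > 0" "m > 0"
    and cop: "coprime b n"
    and t_lt: "t < n"
    and i_first: "int m - 1 + int \<delta> \<le> i 1"
    and i_last: "i s \<le> int n - int \<delta>"
    and i_gap: "\<forall>l. 1 \<le> l \<and> l < s \<longrightarrow> i (l + 1) - i l \<ge> int \<delta>"
    and A_def: "A = {rpow \<alpha> n (int t + int j * int b) | j. j \<le> m - 1}
                 \<union> {rpow \<alpha> n (int t + i l * int b) | l. 1 \<le> l \<and> l \<le> s}"
    and B_def: "B = {rpow \<alpha> n (j * int b) | j::int.
                    - ((int \<delta> - 2) div 2) \<le> j \<and> j \<le> (int \<delta> - 2) div 2}"
    and cyclo: "\<forall>j<n. \<alpha> ^ j \<in> setmult A B \<longrightarrow> \<alpha> ^ ((j * q) mod n) \<in> setmult A B"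
begin

definition h :: int where "h = (int \<delta> - 2) div 2"
definition E :: "int \<Rightarrow> 'a" where "E j = R (int t + j * int b)"
definition J :: "int set" where
  "J = {-h .. int m - 1 + h} \<union> (\<Union>l\<in>{1..s}. {i l - h .. i l + h})"

lemma delta_h: "int \<delta> = 2 * h + 2" "h \<ge> 0"
  using delta unfolding h_def by (auto elim!: evenE)

lemma i_mono: "1 \<le> l \<Longrightarrow> l \<le> l' \<Longrightarrow> l' \<le> s \<Longrightarrow> i l' - i l \<ge> int (l' - l) * int \<delta>"
proof (induction l')
  case 0 thus ?case by simp
next
  case (Suc k)
  show ?case
  proof (cases "l = Suc k")
    case True thus ?thesis by simp
  next
    case False
    hence lk: "l \<le> k" "k < s" using Suc.prems by auto
    have ih: "i k - i l \<ge> int (k - l) * int \<delta>" using Suc.IH Suc.prems lk by simp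
    have "i (k + 1) - i k \<ge> int \<delta>" using i_gap Suc.prems lk by auto
    moreover have "int (Suc k - l) * int \<delta> = int (k - l) * int \<delta> + int \<delta>"
      using lk by (simp add: of_nat_diff algebra_simps)
    ultimately show ?thesis using ih by simp
  qed
qed

lemma i_bounds: "1 \<le> l \<Longrightarrow> l \<le> s \<Longrightarrow> int m - 1 + int \<delta> \<le> i l \<and> i l \<le> int n - int \<delta>"
proof -
  assume l: "1 \<le> l" "l \<le> s"
  have "i l - i 1 \<ge> int (l - 1) * int \<delta>" using i_mono[of 1 l] l by simp
  moreover have "i s - i l \<ge> int (s - l) * int \<delta>" using i_mono[of l s] l by simp
  moreover have "int (l - 1) * int \<delta> \<ge> 0" "int (s - l) * int \<delta> \<ge> 0" by simp_all
  ultimately show ?thesis using i_first i_last by linarith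
qed

lemma n_big: "int m - 1 + 2 * int \<delta> \<le> int n"
  using i_bounds[of s] pos by simp

lemma i_disj: "1 \<le> l \<Longrightarrow> l < l' \<Longrightarrow> l' \<le> s \<Longrightarrow> i l' - i l \<ge> int \<delta>"
proof -
  assume a: "1 \<le> l" "l < l'" "l' \<le> s"
  have "i l' - i l \<ge> int (l' - l) * int \<delta>" using i_mono[of l l'] a by simp
  moreover have "int (l' - l) \<ge> 1" using a by simp
  hence "int (l' - l) * int \<delta> \<ge> 1 * int \<delta>" by (intro mult_right_mono) simp_all
  ultimately show ?thesis by simp
qed

lemma J_range: "j \<in> J \<Longrightarrow> -h \<le> j \<and> j \<le> int n - h - 2"
proof -
  assume "j \<in> J"
  then consider "j \<in> {-h .. int m - 1 + h}" | l where "l \<in> {1..s}" "j \<in> {i l - h .. i l + h}"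
    unfolding J_def by blast
  thus ?thesis
  proof cases
    case 1 thus ?thesis using n_big delta_h by auto
  next
    case 2 thus ?thesis using i_bounds[of l] delta_h by auto
  qed
qed

lemma dvd_small: "int n dvd x \<Longrightarrow> - int n < x \<Longrightarrow> x < int n \<Longrightarrow> x = 0"
proof -
  assume a: "int n dvd x" "- int n < x" "x < int n"
  then obtain k where k: "x = int n * k" by (elim dvdE)
  show "x = 0"
  proof (rule ccontr)
    assume "x \<noteq> 0"
    hence "k \<noteq> 0" using k by simp
    then consider "k \<ge> 1" | "k \<le> -1" by linarith
    thus False
    proof cases
      case 1
      hence "int n * 1 \<le> int n * k" by (intro mult_left_mono) simp_all
      thus False using a k by linarith
    next
      case 2
      hence "int n * k \<le> int n * (-1)" by (intro mult_left_mono) simp_all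
      thus False using a k by linarith
    qed
  qed
qed

lemma cop_int: "coprime (int b) (int n)" using cop by simp

lemma E_inj_iff: "E x = E y \<longleftrightarrow> int n dvd x - y"
proof -
  have "E x = E y \<longleftrightarrow> int n dvd (int t + x * int b) - (int t + y * int b)"
    by (simp add: E_def rpow_inj)
  also have "(int t + x * int b) - (int t + y * int b) = int b * (x - y)" by (simp add: algebra_simps)
  also have "int n dvd int b * (x - y) \<longleftrightarrow> int n dvd x - y"
    using cop_int by (metis coprime_commute coprime_dvd_mult_right_iff)
  finally show ?thesis .
qed

lemma E_inj: "inj_on E J"
proof (rule inj_onI)
  fix x y assume "x \<in> J" "y \<in> J" "E x = E y"
  hence "int n dvd x - y" "- int n < x - y" "x - y < int n"
    using J_range[of x] J_range[of y] E_inj_iff by auto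
  thus "x = y" using dvd_small by fastforce
qed


lemma EB: "E x * R (y * int b) = E (x + y)"
  unfolding E_def rpow_add by (rule arg_cong[where f=R]) (simp add: algebra_simps)

lemma A_eq: "A = E ` (int ` {..m-1} \<union> i ` {1..s})"
  unfolding A_def E_def by auto

lemma B_eq: "B = (\<lambda>j. R (j * int b)) ` {-h..h}"
  unfolding B_def h_def by auto

definition AB where "AB = setmult A B"

lemma AB_eq: "AB = E ` J"
proof (intro set_eqI iffI)
  fix x assume "x \<in> AB"
  then obtain a c where ac: "x = a * c" "a \<in> A" "c \<in> B" by (auto simp: AB_def setmult_def)
  from ac(3) obtain j2 where j2: "c = R (j2 * int b)" "-h \<le> j2" "j2 \<le> h" by (auto simp: B_eq)
  from ac(2) consider j where "j \<le> m - 1" "a = E (int j)" | l where "l \<in> {1..s}" "a = E (i l)"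
    by (auto simp: A_eq)
  thus "x \<in> E ` J"
  proof cases
    case 1
    have "int j + j2 \<in> J" using 1 j2 pos unfolding J_def by auto
    thus ?thesis using ac 1 j2 EB by auto
  next
    case 2
    have "i l + j2 \<in> {i l - h .. i l + h}" using j2 by auto
    hence "i l + j2 \<in> J" unfolding J_def using 2 by blast
    thus ?thesis using ac 2 j2 EB by auto
  qed
next
  fix x assume "x \<in> E ` J"
  then obtain j where j: "j \<in> J" "x = E j" by auto
  then consider "j \<in> {-h .. int m - 1 + h}" | l where "l \<in> {1..s}" "j \<in> {i l - h .. i l + h}"
    unfolding J_def by blast
  thus "x \<in> AB"
  proof cases
    case 1
    define j1 where "j1 = max 0 (min (int m - 1) j)"
    have j1: "0 \<le> j1" "j1 \<le> int m - 1" "-h \<le> j - j1" "j - j1 \<le> h"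
      using 1 pos delta_h unfolding j1_def by auto
    have "E j1 \<in> A" unfolding A_eq using j1 by (intro imageI UnI1) (auto intro!: image_eqI[of _ _ "nat j1"])
    moreover have "R ((j - j1) * int b) \<in> B" unfolding B_eq using j1 by auto
    moreover have "x = E j1 * R ((j - j1) * int b)" using j EB by simp
    ultimately show ?thesis by (auto simp: AB_def setmult_def)
  next
    case 2
    have "E (i l) \<in> A" unfolding A_eq using 2 by auto
    moreover have "R ((j - i l) * int b) \<in> B" unfolding B_eq using 2 by auto
    moreover have "x = E (i l) * R ((j - i l) * int b)" using j EB by simp
    ultimately show ?thesis by (auto simp: AB_def setmult_def)
  qed
qed

lemma card_J: "card J = m - 1 + (s + 1) * (\<delta> - 1)"
proof -
  define I0 where "I0 = {-h .. int m - 1 + h}"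
  define U where "U = (\<Union>l\<in>{1..s}. {i l - h .. i l + h})"
  have cI0: "card I0 = m + 2 * nat h" unfolding I0_def using delta_h pos by simp
  have disj: "{i l - h .. i l + h} \<inter> {i l' - h .. i l' + h} = {}"
    if ll: "l \<in> {1..s}" "l' \<in> {1..s}" "l \<noteq> l'" for l l'
  proof -
    consider "l < l'" | "l' < l" using ll(3) by linarith
    thus ?thesis
    proof cases
      case 1 thus ?thesis using i_disj[of l l'] ll delta_h by auto
    next
      case 2 thus ?thesis using i_disj[of l' l] ll delta_h by auto
    qed
  qed
  have cU: "card U = s * (2 * nat h + 1)"
  proof -
    have "card U = (\<Sum>l\<in>{1..s}. card {i l - h .. i l + h})"
      unfolding U_def by (rule card_UN_disjoint) (use disj in auto)
    also have "\<dots> = (\<Sum>l\<in>{1..s}. 2 * nat h + 1)"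
      by (rule sum.cong) (use delta_h in auto)
    finally show ?thesis by simp
  qed
  have "I0 \<inter> U = {}"
  proof -
    have "\<forall>l\<in>{1..s}. int m - 1 + h < i l - h" using i_bounds delta_h by fastforce
    thus ?thesis unfolding I0_def U_def by fastforce
  qed
  hence "card J = card I0 + card U" unfolding J_def I0_def[symmetric] U_def[symmetric]
    by (intro card_Un_disjoint) (auto simp: U_def I0_def)
  also have "\<dots> = m - 1 + (s + 1) * (\<delta> - 1)"
  proof -
    have "\<delta> - 1 = 2 * nat h + 1" using delta_h by linarith
    thus ?thesis using cI0 cU pos by (simp add: algebra_simps)
  qed
  finally show ?thesis .
qed

lemma finJ: "finite J" unfolding J_def by auto

lemma card_AB: "card AB = m - 1 + (s + 1) * (\<delta> - 1)"
  using AB_eq card_image[OF E_inj] card_J by simp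

lemma card_AB_le: "card AB < n"
proof -
  have "J \<subseteq> {-h .. int n - h - 2}" using J_range by auto
  hence "card J \<le> card {-h .. int n - h - 2}" by (intro card_mono) auto
  also have "\<dots> = n - 1" using npos by simp
  finally show ?thesis using AB_eq card_image[OF E_inj] npos by simp
qed


lemma finAB: "finite AB" by simp

lemma AB_root: "\<beta> \<in> AB \<Longrightarrow> \<beta> ^ n = 1"
  using AB_eq rpow_root by (auto simp: E_def)

lemma AB_frob: "\<beta> \<in> AB \<Longrightarrow> \<beta> ^ q \<in> AB"
proof -
  assume bAB: "\<beta> \<in> AB"
  then obtain j where "\<beta> = E j" using AB_eq by auto
  define k where "k = nat ((int t + j * int b) mod int n)"
  have k: "\<beta> = \<alpha> ^ k" "k < n"
  proof -
    show "\<beta> = \<alpha> ^ k" using \<open>\<beta> = E j\<close> by (simp add: E_def rpow_def k_def)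
    show "k < n" unfolding k_def using npos by (subst nat_less_iff) simp_all
  qed
  have "\<alpha> ^ ((k * q) mod n) \<in> AB" using cyclo k bAB by (simp add: AB_def)
  moreover have "\<alpha> ^ ((k * q) mod n) = \<beta> ^ q" using k pow_mod_n[of "k*q"] by (simp add: power_mult)
  ultimately show ?thesis by simp
qed

lemma frob_perm: "(\<lambda>\<beta>. \<beta> ^ q) ` AB = AB"
proof (rule endo_inj_surj[OF finAB])
  show "(\<lambda>\<beta>. \<beta> ^ q) ` AB \<subseteq> AB" using AB_frob by auto
  show "inj_on (\<lambda>\<beta>. \<beta> ^ q) AB" by (rule inj_onI) (simp add: frob_inj)
qed

definition g where "g = gen_poly AB"

lemma inF_g: "inF g"
proof -
  have "frobp g = (\<Prod>\<beta>\<in>AB. frobp [:-\<beta>, 1:])" by (simp add: g_def gen_poly_def frobp_prod)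
  also have "\<dots> = (\<Prod>\<beta>\<in>AB. [:-(\<beta> ^ q), 1:])" by (simp add: frobp_lin frob_neg)
  also have "\<dots> = (\<Prod>\<gamma>\<in>(\<lambda>\<beta>. \<beta> ^ q) ` AB. [:-\<gamma>, 1:])"
    by (rule prod.reindex[symmetric, unfolded comp_def]) (rule inj_onI, simp add: frob_inj)
  also have "\<dots> = g" by (simp add: frob_perm g_def gen_poly_def)
  finally show ?thesis by (simp add: inF_frobp)
qed

definition N where "N = monom (1::'a) n - 1"

lemma inF_N: "inF N"
  unfolding inF_def N_def by (auto simp: coeff_monom coeff_1 intro: Fq_closed)

lemma g_dvd_N: "g dvd N"
  unfolding g_def N_def by (rule gen_poly_dvd[OF finAB]) (simp add: poly_monom AB_root)

definition h0 where "h0 = N div g"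
definition d where "d = n - card AB"

lemma N_eq: "N = g * h0" using g_dvd_N by (simp add: h0_def)
lemma g_nz: "g \<noteq> 0" by (simp add: g_def gen_poly_nz)
lemma N_nz: "N \<noteq> 0" unfolding N_def by (rule xn1_nz[OF npos])
lemma h0_nz: "h0 \<noteq> 0" using N_eq N_nz by auto
lemma inF_h0: "inF h0" using inF_div_mod[OF inF_N inF_g g_nz] by (simp add: h0_def)
lemma deg_g: "degree g = card AB" by (simp add: g_def degree_gen_poly)
lemma deg_N: "degree N = n" by (simp add: N_def degree_xn1 npos)
lemma deg_h0: "degree h0 = d"
proof -
  have "degree N = degree g + degree h0" using N_eq g_nz h0_nz by (simp add: degree_mult_eq)
  thus ?thesis using deg_g deg_N by (simp add: d_def)
qed
lemma d_pos: "d > 0" using card_AB_le by (simp add: d_def)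

definition U where "U = {u. inF u \<and> degree u < d}"

lemma deg_gu: "u \<in> U \<Longrightarrow> degree (g * u) < n"
proof -
  assume "u \<in> U"
  hence "degree u < d" by (simp add: U_def)
  show ?thesis
  proof (cases "u = 0")
    case True thus ?thesis using npos by simp
  next
    case False
    hence "degree (g * u) = degree g + degree u" using g_nz by (simp add: degree_mult_eq)
    thus ?thesis using \<open>degree u < d\<close> deg_g card_AB_le by (simp add: d_def)
  qed
qed

lemma in_subfield_Fq: "in_subfield q x \<longleftrightarrow> x \<in> Fq"
  by (simp add: in_subfield_def Fq_def)

definition C where "C = cyc_code_sub q n AB"

lemma C_eq: "C = (\<lambda>u. coeff (g * u)) ` U"
proof (intro set_eqI iffI)
  fix v assume "v \<in> C"
  then obtain f where f: "v = coeff ((g * f) mod N)" "\<forall>i. in_subfield q (coeff f i)"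
    by (auto simp: C_def cyc_code_sub_def g_def N_def)
  have iF: "inF f" using f(2) by (simp add: inF_def in_subfield_Fq)
  define r where "r = f mod h0"
  have iFr: "inF r" using inF_div_mod[OF iF inF_h0 h0_nz] by (simp add: r_def)
  have dr: "degree r < d"
    using degree_mod_less[OF h0_nz, of f] deg_h0 d_pos by (auto simp: r_def)
  have rU: "r \<in> U" using iFr dr by (simp add: U_def)
  have ff: "f = f div h0 * h0 + r" by (simp add: r_def)
  have "g * f = g * (f div h0 * h0 + r)" using ff by (rule arg_cong)
  also have "\<dots> = g * r + N * (f div h0)" unfolding N_eq by (simp add: algebra_simps)
  finally have "g * f = g * r + N * (f div h0)" .
  hence "(g * f) mod N = (g * r) mod N" by simp
  also have "\<dots> = g * r" using deg_gu[OF rU] deg_N by (intro mod_poly_less) simp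
  finally show "v \<in> (\<lambda>u. coeff (g * u)) ` U" using f(1) rU by auto
next
  fix v assume "v \<in> (\<lambda>u. coeff (g * u)) ` U"
  then obtain u where u: "u \<in> U" "v = coeff (g * u)" by auto
  have "(g * u) mod N = g * u" using deg_gu[OF u(1)] deg_N by (intro mod_poly_less) simp
  moreover have "\<forall>i. in_subfield q (coeff u i)" using u(1) by (simp add: U_def inF_def in_subfield_Fq)
  ultimately have mem: "g * u \<in> {(g * f) mod N | f. \<forall>i. in_subfield q (coeff f i)}" by force
  have "C = coeff ` {(g * f) mod N | f. \<forall>i. in_subfield q (coeff f i)}"
    unfolding C_def cyc_code_sub_def g_def N_def ..
  thus "v \<in> C" using mem u(2) by blast
qed


definition Ls where "Ls = {xs. set xs \<subseteq> Fq \<and> length xs = d}"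

lemma nth_default_map_upt: "nth_default 0 (map f [0..<k]) j = (if j < k then f j else 0)"
  by (simp add: nth_default_def)

lemma U_eq: "U = Poly ` Ls"
proof (intro set_eqI iffI)
  fix u assume u: "u \<in> U"
  define xs where "xs = map (coeff u) [0..<d]"
  have "Poly xs = u"
  proof (rule poly_eqI)
    fix j
    have "coeff u j = 0" if "j \<ge> d" using u that by (intro coeff_eq_0) (auto simp: U_def)
    thus "coeff (Poly xs) j = coeff u j" by (auto simp: xs_def nth_default_map_upt)
  qed
  moreover have "xs \<in> Ls" using u by (auto simp: xs_def Ls_def U_def inF_def)
  ultimately show "u \<in> Poly ` Ls" by blast
next
  fix u assume "u \<in> Poly ` Ls"
  then obtain xs where xs: "xs \<in> Ls" "u = Poly xs" by auto
  have cu: "coeff u j = (if j < d then xs ! j else 0)" for j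
    using xs by (simp add: Ls_def nth_default_def)
  have "inF u" unfolding inF_def
  proof
    fix j show "coeff u j \<in> Fq" using xs(1) cu[of j] Fq_closed(1) by (auto simp: Ls_def)
  qed
  moreover have "degree u \<le> d - 1" by (rule degree_le) (auto simp: cu)
  ultimately show "u \<in> U" using d_pos by (simp add: U_def)
qed

lemma inj_Poly_Ls: "inj_on Poly Ls"
proof (rule inj_onI)
  fix xs ys assume a: "xs \<in> Ls" "ys \<in> Ls" "Poly xs = Poly ys"
  hence "nth_default 0 xs = nth_default 0 ys" by (metis coeff_Poly_eq)
  moreover have "length xs = length ys" using a by (simp add: Ls_def)
  ultimately show "xs = ys" by (metis nth_default_def nth_equalityI)
qed

lemma card_U: "card U = q ^ d"
proof -
  have "card Ls = card Fq ^ d" unfolding Ls_def by (rule card_lists_length_eq) simp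
  thus ?thesis using U_eq card_image[OF inj_Poly_Ls] card_Fq by simp
qed

lemma inj_coeff_g: "inj_on (\<lambda>u. coeff (g * u)) U"
proof (rule inj_onI)
  fix u1 u2 assume "coeff (g * u1) = coeff (g * u2)"
  hence "g * u1 = g * u2" by (simp add: coeff_inject)
  thus "u1 = u2" using g_nz by simp
qed

lemma card_C: "card C = q ^ d"
  using C_eq card_image[OF inj_coeff_g] card_U by simp

lemma finC: "finite C"
proof -
  have "finite Ls" unfolding Ls_def by (rule finite_lists_length_eq) simp
  thus ?thesis using C_eq U_eq by simp
qed

lemma C_props:
  assumes "v \<in> C"
  shows "\<forall>l\<ge>n. v l = 0" "\<forall>l. v l \<in> Fq" "\<forall>\<beta>\<in>AB. ev n v \<beta> = 0"
proof -
  obtain u where u: "u \<in> U" "v = coeff (g * u)" using assms C_eq by auto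
  have dg: "degree (g * u) < n" by (rule deg_gu[OF u(1)])
  show "\<forall>l\<ge>n. v l = 0" using dg u(2) by (auto intro: coeff_eq_0)
  have "inF (g * u)" using inF_g u(1) by (intro inF_mult) (auto simp: U_def)
  thus "\<forall>l. v l \<in> Fq" using u(2) by (simp add: inF_def)
  show "\<forall>\<beta>\<in>AB. ev n v \<beta> = 0"
  proof
    fix \<beta> assume "\<beta> \<in> AB"
    have "ev n v \<beta> = poly (g * u) \<beta>" using poly_as_ev[OF dg] u(2) by simp
    also have "\<dots> = 0" using poly_gen_poly[OF finAB \<open>\<beta> \<in> AB\<close>] by (simp add: g_def)
    finally show "ev n v \<beta> = 0" .
  qed
qed

lemma zero_C: "(\<lambda>_. 0) \<in> C"
proof -
  have "(0::'a poly) \<in> U" using d_pos by (simp add: U_def inF_def Fq_closed)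
  hence "coeff (g * 0) \<in> C" using C_eq by blast
  moreover have "coeff (g * 0) = (\<lambda>_. 0)" by (simp add: fun_eq_iff)
  ultimately show ?thesis by simp
qed

lemma diff_C: "x \<in> C \<Longrightarrow> y \<in> C \<Longrightarrow> (\<lambda>l. x l - y l) \<in> C"
proof -
  assume "x \<in> C" "y \<in> C"
  then obtain u1 u2 where u: "u1 \<in> U" "x = coeff (g * u1)" "u2 \<in> U" "y = coeff (g * u2)"
    using C_eq by auto
  have "u1 - u2 \<in> U" using u by (auto simp: U_def intro: inF_diff degree_diff_less)
  hence "coeff (g * (u1 - u2)) \<in> C" using C_eq by blast
  moreover have "coeff (g * (u1 - u2)) = (\<lambda>l. x l - y l)"
    using u by (simp add: fun_eq_iff right_diff_distrib)
  ultimately show ?thesis by simp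
qed

end


lemma shift_back: "n > 0 \<Longrightarrow> l < n \<Longrightarrow> ((l + k) mod n + (n - k mod n)) mod n = (l::nat)"
proof -
  assume n: "n > 0" "l < n"
  have "k mod n < n" using n by simp
  have "((l + k) mod n + (n - k mod n)) mod n = (l + k + (n - k mod n)) mod n"
    by (simp add: mod_add_left_eq)
  also have "l + k + (n - k mod n) = l + n * (k div n) + n"
  proof -
    have "k = n * (k div n) + k mod n" by simp
    thus ?thesis using \<open>k mod n < n\<close> by linarith
  qed
  also have "(l + n * (k div n) + n) mod n = l" using n by simp
  finally show ?thesis .
qed

lemma shift_bij: "n > 0 \<Longrightarrow> (\<lambda>l. (l + k) mod n) ` {..<n} = {..<(n::nat)}"
proof (rule endo_inj_surj)
  assume n: "n > 0"
  show "(\<lambda>l. (l + k) mod n) ` {..<n} \<subseteq> {..<n}" using n by auto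
  show "inj_on (\<lambda>l. (l + k) mod n) {..<n}"
  proof (rule inj_onI)
    fix x y assume xy: "x \<in> {..<n}" "y \<in> {..<n}" "(x + k) mod n = (y + k) mod n"
    have "x = ((x + k) mod n + (n - k mod n)) mod n" using shift_back[of n x k] xy n by simp
    also have "\<dots> = ((y + k) mod n + (n - k mod n)) mod n" using xy by simp
    also have "\<dots> = y" using shift_back[of n y k] xy n by simp
    finally show "x = y" .
  qed
qed simp

lemma shift_inj: "n > 0 \<Longrightarrow> inj_on (\<lambda>l. (l + k) mod n) {..<(n::nat)}"
  by (rule eq_card_imp_inj_on) (simp_all add: shift_bij)

lemma sum_shift:
  assumes "n > 0"
  shows "(\<Sum>l<n. F ((l + k) mod n)) = (\<Sum>l<(n::nat). F l)"
proof -
  have "(\<Sum>l<n. F ((l + k) mod n)) = (\<Sum>l\<in>(\<lambda>l. (l + k) mod n) ` {..<n}. F l)"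
    by (rule sum.reindex[OF shift_inj[OF assms], unfolded comp_def, symmetric])
  thus ?thesis using shift_bij[OF assms] by simp
qed

lemma root_sum: "(\<omega>::'a::field) ^ n = 1 \<Longrightarrow> \<omega> \<noteq> 1 \<Longrightarrow> (\<Sum>l<n. \<omega> ^ l) = 0"
  by (simp add: sum_gp_strict)

context main
begin

definition CA where "CA = cyc_code_ext n A"
definition D where "D = dual_code n CA"

lemma finA: "finite A" by simp

lemma A_root: "\<beta> \<in> A \<Longrightarrow> \<beta> ^ n = 1"
  using A_eq rpow_root by (auto simp: E_def)

lemma CA_eq: "CA = {v. (\<forall>l\<ge>n. v l = 0) \<and> (\<forall>\<beta>\<in>A. ev n v \<beta> = 0)}"
  unfolding CA_def by (rule cyc_code_ext_char[OF npos finA]) (use A_root in auto)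

lemma D_iff: "y \<in> D \<longleftrightarrow> (\<forall>l\<ge>n. y l = 0) \<and> (\<forall>x\<in>CA. (\<Sum>l<n. x l * y l) = 0)"
  by (simp add: D_def dual_code_def)

lemma A_sub_AB: "A \<subseteq> AB"
proof
  fix \<beta> assume "\<beta> \<in> A"
  moreover have "(1::'a) \<in> B" unfolding B_eq using delta_h by (auto intro!: image_eqI[of _ _ 0] simp: rpow_zero)
  ultimately show "\<beta> \<in> AB" unfolding AB_def setmult_def by force
qed

lemma rho_B: "-h \<le> x \<Longrightarrow> x \<le> h \<Longrightarrow> R (x * int b) \<in> B"
  unfolding B_eq by auto

lemma twist_CA:
  assumes c: "\<forall>l\<ge>n. c l = 0" "\<forall>\<beta>\<in>AB. ev n c \<beta> = 0" and x: "-h \<le> x" "x \<le> h"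
  shows "(\<lambda>l. if l < n then c l * R (x * int b) ^ l else 0) \<in> CA"
  unfolding CA_eq
proof (intro CollectI conjI allI ballI impI)
  fix l :: nat assume "l \<ge> n" thus "(if l < n then c l * R (x * int b) ^ l else 0) = 0" by simp
next
  fix \<beta> assume b: "\<beta> \<in> A"
  have "ev n (\<lambda>l. if l < n then c l * R (x * int b) ^ l else 0) \<beta> = ev n c (\<beta> * R (x * int b))"
    unfolding ev_def by (rule sum.cong) (simp_all add: power_mult_distrib mult_ac)
  also have "\<beta> * R (x * int b) \<in> AB" using b rho_B[OF x] unfolding AB_def setmult_def by blast
  hence "ev n c (\<beta> * R (x * int b)) = 0" using c(2) by blast
  finally show "ev n (\<lambda>l. if l < n then c l * R (x * int b) ^ l else 0) \<beta> = 0" .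
qed

lemma cop_neg: "coprime (- int b) (int n)" using cop_int by simp

lemma dual_wt:
  assumes y: "y \<in> D" and nz: "y l0 \<noteq> 0"
  shows "card {l. l < n \<and> y l \<noteq> 0} \<ge> \<delta>"
proof (rule ccontr)
  assume "\<not> ?thesis"
  hence wt: "card {l. l < n \<and> y l \<noteq> 0} \<le> \<delta> - 1" by linarith
  have yz: "\<forall>l\<ge>n. y l = 0" using y D_iff by blast
  have evs: "\<forall>j<\<delta> - 1. ev n y (R (- (int t + int m * int b) + int j * (- int b))) = 0"
  proof (intro allI impI)
    fix j assume j: "j < \<delta> - 1"
    define z where "z = - (int t + int m * int b) + int j * (- int b)"
    define c where "c = (\<lambda>l. if l < n then R (z * int l) else 0)"
    have cCA: "c \<in> CA" unfolding CA_eq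
    proof (intro CollectI conjI allI ballI impI)
      fix l :: nat assume "l \<ge> n" thus "c l = 0" by (simp add: c_def)
    next
      fix \<beta> assume b: "\<beta> \<in> A"
      then consider j1 where "j1 \<le> m - 1" "\<beta> = E (int j1)" | l where "l \<in> {1..s}" "\<beta> = E (i l)"
        by (auto simp: A_eq)
      then obtain x where x: "\<beta> = E x" "\<not> int n dvd (x - int m - int j)"
      proof cases
        case 1
        have "- int n < int j1 - int m - int j" "int j1 - int m - int j < 0"
          using 1 j n_big pos by linarith+
        hence "\<not> int n dvd (int j1 - int m - int j)" using dvd_small by fastforce
        thus ?thesis using 1 that by blast
      next
        case 2
        have "0 < i l - int m - int j" "i l - int m - int j < int n"
          using 2 j i_bounds[of l] delta pos by auto
        hence "\<not> int n dvd (i l - int m - int j)" using dvd_small by fastforce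
        thus ?thesis using 2 that by blast
      qed
      define \<omega> where "\<omega> = R (z + int t + x * int b)"
      have "ev n c \<beta> = (\<Sum>l<n. \<omega> ^ l)"
        unfolding ev_def
      proof (rule sum.cong[OF refl])
        fix l assume "l \<in> {..<n}"
        have "R (z * int l) * E x ^ l = R (z * int l + (int t + x * int b) * int l)"
          by (simp add: E_def rpow_pow rpow_add)
        also have "\<dots> = \<omega> ^ l" unfolding \<omega>_def rpow_pow by (rule arg_cong[where f=R]) (simp add: algebra_simps)
        finally show "c l * \<beta> ^ l = \<omega> ^ l" using \<open>l \<in> {..<n}\<close> x(1) by (simp add: c_def)
      qed
      also have "\<dots> = 0"
      proof (rule root_sum)
        show "\<omega> ^ n = 1" unfolding \<omega>_def by (rule rpow_root)
        have "z + int t + x * int b = int b * (x - int m - int j)" by (simp add: z_def algebra_simps)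
        hence "int n dvd z + int t + x * int b \<Longrightarrow> int n dvd x - int m - int j"
          using cop_int by (metis coprime_commute coprime_dvd_mult_right_iff)
        thus "\<omega> \<noteq> 1" unfolding \<omega>_def rpow_one_iff using x(2) by blast
      qed
      finally show "ev n c \<beta> = 0" .
    qed
    have "(\<Sum>l<n. c l * y l) = 0" using y cCA D_iff by blast
    moreover have "(\<Sum>l<n. c l * y l) = ev n y (R z)"
      unfolding ev_def by (rule sum.cong) (simp_all add: c_def rpow_pow mult.commute)
    ultimately show "ev n y (R (- (int t + int m * int b) + int j * (- int b))) = 0" by (simp add: z_def)
  qed
  have "y l0 = 0" by (rule bch[OF yz cop_neg evs wt])
  thus False using nz by simp
qed


lemma D_diff: "x \<in> D \<Longrightarrow> y \<in> D \<Longrightarrow> (\<lambda>l. x l - y l) \<in> D"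
  unfolding D_iff by (simp add: right_diff_distrib sum_subtractf)

lemma D_zero: "(\<lambda>_. 0) \<in> D" unfolding D_iff by simp

lemma y0_D: "(\<lambda>l. if l < n then E 0 ^ l else 0) \<in> D"
  unfolding D_iff
proof (intro conjI allI impI ballI)
  fix x assume "x \<in> CA"
  moreover have "E 0 \<in> A" unfolding A_eq using pos by force
  ultimately have "ev n x (E 0) = 0" using CA_eq by blast
  thus "(\<Sum>l<n. x l * (if l < n then E 0 ^ l else 0)) = 0" by (simp add: ev_def)
qed simp

lemma shift_D:
  assumes y: "y \<in> D"
  shows "(\<lambda>l. if l < n then y ((l + k) mod n) else 0) \<in> D"
  unfolding D_iff
proof (intro conjI allI impI ballI)
  fix c assume c: "c \<in> CA"
  define k' where "k' = n - k mod n"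
  define c' where "c' = (\<lambda>l. if l < n then c ((l + k') mod n) else 0)"
  have cz: "\<forall>l\<ge>n. c l = 0" and cev: "\<forall>\<beta>\<in>A. ev n c \<beta> = 0" using c CA_eq by auto
  have c'CA: "c' \<in> CA" unfolding CA_eq
  proof (intro CollectI conjI allI ballI impI)
    fix l :: nat assume "l \<ge> n" thus "c' l = 0" by (simp add: c'_def)
  next
    fix \<beta> assume b: "\<beta> \<in> A"
    have bn: "\<beta> ^ n = 1" using A_root[OF b] .
    have bp: "\<beta> ^ j = \<beta> ^ (j mod n)" for j
    proof -
      have "\<beta> ^ j = \<beta> ^ (n * (j div n) + j mod n)" by simp
      also have "\<dots> = (\<beta> ^ n) ^ (j div n) * \<beta> ^ (j mod n)" by (simp only: power_add power_mult)
      finally show ?thesis by (simp add: bn)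
    qed
    have "\<beta> ^ k' * ev n c' \<beta> = (\<Sum>l<n. c ((l + k') mod n) * \<beta> ^ ((l + k') mod n))"
      unfolding ev_def sum_distrib_left
    proof (rule sum.cong[OF refl])
      fix l assume "l \<in> {..<n}"
      have "\<beta> ^ k' * \<beta> ^ l = \<beta> ^ ((l + k') mod n)" by (simp add: power_add[symmetric] bp[of "k' + l"] add.commute)
      thus "\<beta> ^ k' * (c' l * \<beta> ^ l) = c ((l + k') mod n) * \<beta> ^ ((l + k') mod n)"
        using \<open>l \<in> {..<n}\<close> by (simp add: c'_def mult_ac)
    qed
    also have "\<dots> = (\<Sum>l<n. c l * \<beta> ^ l)" by (rule sum_shift[OF npos])
    also have "\<dots> = 0" using cev b by (simp add: ev_def)
    finally have "\<beta> ^ k' * ev n c' \<beta> = 0" .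
    moreover have "\<beta> \<noteq> 0" using bn npos by (metis power_0_left zero_neq_one neq0_conv)
    ultimately show "ev n c' \<beta> = 0" by simp
  qed
  have "(\<Sum>l<n. c l * (if l < n then y ((l + k) mod n) else 0))
        = (\<Sum>l<n. c' ((l + k) mod n) * y ((l + k) mod n))"
  proof (rule sum.cong[OF refl])
    fix l assume l: "l \<in> {..<n}"
    have "c' ((l + k) mod n) = c l"
      using shift_back[OF npos, of l k] l npos by (simp add: c'_def k'_def)
    thus "c l * (if l < n then y ((l + k) mod n) else 0) = c' ((l + k) mod n) * y ((l + k) mod n)"
      using l by simp
  qed
  also have "\<dots> = (\<Sum>l<n. c' l * y l)" by (rule sum_shift[OF npos])
  also have "\<dots> = 0" using y c'CA D_iff by blast
  finally show "(\<Sum>l<n. c l * (if l < n then y ((l + k) mod n) else 0)) = 0" .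
qed simp

definition dA where "dA = min_dist n D"

lemma hdist_supp: "x \<in> D \<Longrightarrow> y \<in> D \<Longrightarrow> hdist {..<n} x y = card {l. l < n \<and> x l - y l \<noteq> 0}"
  unfolding hdist_def by (rule arg_cong[where f=card]) auto

lemma D_zero_beyond: "x \<in> D \<Longrightarrow> l \<ge> n \<Longrightarrow> x l = 0" using D_iff by blast

lemma dA_props: "\<delta> \<le> dA \<and> (\<exists>z\<in>D. card {l. l < n \<and> z l \<noteq> 0} = dA)"
proof -
  define P where "P = {hdist {..<n} x y | x y. x \<in> D \<and> y \<in> D \<and> x \<noteq> y}"
  have y0nz: "(\<lambda>l. if l < n then E 0 ^ l else 0) \<noteq> (\<lambda>_. 0)"
  proof
    assume "(\<lambda>l. if l < n then E 0 ^ l else 0) = (\<lambda>_. 0)"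
    hence "E 0 ^ 0 = 0" using npos by (metis (mono_tags, lifting))
    thus False by simp
  qed
  have "P \<noteq> {}" unfolding P_def using y0_D D_zero y0nz by blast
  hence "dA \<in> P" unfolding dA_def min_dist_def P_def[symmetric] by (rule Inf_nat_def1)
  then obtain x y where xy: "x \<in> D" "y \<in> D" "x \<noteq> y" "dA = hdist {..<n} x y" unfolding P_def by blast
  define z where "z = (\<lambda>l. x l - y l)"
  have zD: "z \<in> D" using D_diff xy by (simp add: z_def)
  obtain l0 where l0: "x l0 \<noteq> y l0" using xy(3) by auto
  have "z l0 \<noteq> 0" using l0 by (simp add: z_def)
  hence "\<delta> \<le> card {l. l < n \<and> z l \<noteq> 0}" by (rule dual_wt[OF zD])
  moreover have "card {l. l < n \<and> z l \<noteq> 0} = dA" using xy hdist_supp by (simp add: z_def)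
  ultimately show ?thesis using zD by auto
qed


lemma locality:
  assumes i0: "i0 < n"
  shows "\<exists>S. S \<subseteq> {..<n} \<and> i0 \<in> S \<and> card S \<le> dA \<and>
           (\<forall>c\<in>C. card {l\<in>S. c l \<noteq> 0} < \<delta> \<longrightarrow> (\<forall>l\<in>S. c l = 0))"
proof -
  obtain z where z: "z \<in> D" "card {l. l < n \<and> z l \<noteq> 0} = dA" using dA_props by blast
  define S0 where "S0 = {l. l < n \<and> z l \<noteq> 0}"
  have "card S0 \<ge> 2" using z dA_props delta by (simp add: S0_def)
  hence "S0 \<noteq> {}" by auto
  then obtain a where a: "a \<in> S0" by auto
  define k where "k = a + (n - i0)"
  define z' where "z' = (\<lambda>l. if l < n then z ((l + k) mod n) else 0)"
  have z'D: "z' \<in> D" unfolding z'_def by (rule shift_D[OF z(1)])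
  define S where "S = {l. l < n \<and> z' l \<noteq> 0}"
  have an: "a < n" using a by (simp add: S0_def)
  have "(i0 + k) mod n = a"
  proof -
    have "i0 + k = a + n" using i0 by (simp add: k_def)
    thus ?thesis using an by simp
  qed
  hence i0S: "i0 \<in> S" using a i0 by (simp add: S_def z'_def S0_def)
  have cS: "card S \<le> dA"
  proof -
    have "inj_on (\<lambda>l. (l + k) mod n) S"
      using shift_inj[OF npos, of k] by (rule inj_on_subset) (auto simp: S_def)
    moreover have "(\<lambda>l. (l + k) mod n) ` S \<subseteq> S0" by (auto simp: S_def S0_def z'_def)
    ultimately have "card S \<le> card S0" by (rule card_inj_on_le) (simp add: S0_def)
    thus ?thesis using z(2) by (simp add: S0_def)
  qed
  have ker: "\<forall>l\<in>S. c l = 0" if c: "c \<in> C" "card {l\<in>S. c l \<noteq> 0} < \<delta>" for c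
  proof -
    note cp = C_props[OF c(1)]
    define w where "w = (\<lambda>l. c l * z' l)"
    have wz: "\<forall>l\<ge>n. w l = 0" using cp by (simp add: w_def)
    have evs: "\<forall>j<\<delta> - 1. ev n w (R (- h * int b + int j * int b)) = 0"
    proof (intro allI impI)
      fix j assume j: "j < \<delta> - 1"
      define x where "x = int j - h"
      have x: "-h \<le> x" "x \<le> h" using j delta_h by (auto simp: x_def)
      have tw: "(\<lambda>l. if l < n then c l * R (x * int b) ^ l else 0) \<in> CA"
        by (rule twist_CA[OF cp(1) cp(3) x])
      have "(\<Sum>l<n. (if l < n then c l * R (x * int b) ^ l else 0) * z' l) = 0"
        by (rule bspec[OF conjunct2[OF z'D[unfolded D_iff]] tw])
      moreover have "R (- h * int b + int j * int b) = R (x * int b)"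
        by (rule arg_cong[where f=R]) (simp add: x_def algebra_simps)
      moreover have "ev n w (R (x * int b)) = (\<Sum>l<n. (if l < n then c l * R (x * int b) ^ l else 0) * z' l)"
        unfolding ev_def w_def
      proof (rule sum.cong[OF refl])
        fix l assume "l \<in> {..<n}"
        thus "c l * z' l * R (x * int b) ^ l = (if l < n then c l * R (x * int b) ^ l else 0) * z' l"
          by (simp add: mult_ac)
      qed
      ultimately show "ev n w (R (- h * int b + int j * int b)) = 0" by simp
    qed
    have "{l. l < n \<and> w l \<noteq> 0} = {l\<in>S. c l \<noteq> 0}" by (auto simp: w_def S_def)
    hence wt: "card {l. l < n \<and> w l \<noteq> 0} \<le> \<delta> - 1" using c(2) by simp
    have "\<forall>l. w l = 0" using bch[OF wz cop_int evs wt] by blast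
    thus ?thesis by (auto simp: w_def S_def)
  qed
  have "S \<subseteq> {..<n}" by (auto simp: S_def)
  thus ?thesis using i0S cS ker by blast
qed

lemma bch_C:
  assumes c: "c \<in> C" and nz: "c l0 \<noteq> 0"
  shows "card {l. l < n \<and> c l \<noteq> 0} \<ge> m + \<delta> - 1"
proof (rule ccontr)
  assume "\<not> ?thesis"
  hence wt: "card {l. l < n \<and> c l \<noteq> 0} \<le> m + \<delta> - 2" by linarith
  note cp = C_props[OF c]
  have evs: "\<forall>j<m + \<delta> - 2. ev n c (R (int t - h * int b + int j * int b)) = 0"
  proof (intro allI impI)
    fix j assume j: "j < m + \<delta> - 2"
    have "int j - h \<in> J" unfolding J_def using j delta_h pos by auto
    hence "E (int j - h) \<in> AB" using AB_eq by blast
    moreover have "R (int t - h * int b + int j * int b) = E (int j - h)"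
      unfolding E_def by (rule arg_cong[where f=R]) (simp add: algebra_simps)
    ultimately show "ev n c (R (int t - h * int b + int j * int b)) = 0" using cp(3) by simp
  qed
  have "c l0 = 0" by (rule bch[OF cp(1) cop_int evs wt])
  thus False using nz by simp
qed

end


context main
begin

lemma has_loc: "i0 < n \<Longrightarrow> has_locality n C (dA + 1 - \<delta>) \<delta> i0"
proof -
  assume i0: "i0 < n"
  obtain S where S: "S \<subseteq> {..<n}" "i0 \<in> S" "card S \<le> dA"
    "\<forall>c\<in>C. card {l\<in>S. c l \<noteq> 0} < \<delta> \<longrightarrow> (\<forall>l\<in>S. c l = 0)"
    using locality[OF i0] by blast
  have dA: "\<delta> \<le> dA" using dA_props by blast
  have "min_dist_ge S (puncture S C) \<delta>"
    unfolding min_dist_ge_def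
  proof (intro ballI impI)
    fix x y assume x: "x \<in> puncture S C" and y: "y \<in> puncture S C" and xy: "x \<noteq> y"
    obtain c1 where c1: "c1 \<in> C" "x = (\<lambda>j. if j \<in> S then c1 j else 0)" using x by (auto simp: puncture_def)
    obtain c2 where c2: "c2 \<in> C" "y = (\<lambda>j. if j \<in> S then c2 j else 0)" using y by (auto simp: puncture_def)
    define c where "c = (\<lambda>l. c1 l - c2 l)"
    have cC: "c \<in> C" unfolding c_def using diff_C c1 c2 by blast
    have eq: "{l\<in>S. x l \<noteq> y l} = {l\<in>S. c l \<noteq> 0}" by (auto simp: c1 c2 c_def)
    show "\<delta> \<le> hdist S x y"
    proof (rule ccontr)
      assume "\<not> ?thesis"
      hence "card {l\<in>S. c l \<noteq> 0} < \<delta>" using eq by (simp add: hdist_def)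
      hence "\<forall>l\<in>S. c l = 0" using S(4) cC by blast
      hence "x = y" by (auto simp: c1 c2 c_def fun_eq_iff)
      thus False using xy by simp
    qed
  qed
  moreover have "card S \<le> dA + 1 - \<delta> + \<delta> - 1" using S(3) dA delta by simp
  ultimately show ?thesis unfolding has_locality_def using S by blast
qed

lemma is_LRC_C: "is_LRC n C (dA + 1 - \<delta>) \<delta>"
  unfolding is_LRC_def using has_loc dA_props delta by auto

lemma main_result:
  assumes r: "r = dA + 1 - \<delta>"
  shows "is_LRC n C r \<delta> \<and>
         (\<exists>k. card C = q ^ k \<and> int k = int n - int m + 1 - (int s + 1) * (int \<delta> - 1) \<and>
              (\<lceil>real k / real r\<rceil> = int s + 1 \<longrightarrow>
                 min_dist n C = m + \<delta> - 1 \<and> is_optimal_LRC n C k r \<delta> (min_dist n C)))"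
proof -
  have LRC: "is_LRC n C r \<delta>" using is_LRC_C r by simp
  have dA: "\<delta> \<le> dA" using dA_props by blast
  have r1: "r \<ge> 1" using r dA by simp
  have cAB: "card AB = m - 1 + (s + 1) * (\<delta> - 1)" by (rule card_AB)
  have cABn: "card AB < n" by (rule card_AB_le)
  have e1: "card AB + 2 = m + \<delta> + s * (\<delta> - 1)"
  proof -
    have "(s + 1) * (\<delta> - 1) = s * (\<delta> - 1) + (\<delta> - 1)" by (simp add: distrib_right)
    thus ?thesis using cAB pos delta by linarith
  qed
  have kint: "int d = int n - int m + 1 - (int s + 1) * (int \<delta> - 1)"
  proof -
    have i1: "int d = int n - int (card AB)" using cABn by (simp add: d_def)
    have e0: "int (\<delta> - 1) = int \<delta> - 1" using delta by (simp add: of_nat_diff)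
    have e2: "int (s * (\<delta> - 1)) = int s * (int \<delta> - 1)" by (simp only: of_nat_mult e0)
    have "int (card AB + 2) = int (m + \<delta> + s * (\<delta> - 1))" using e1 by (rule arg_cong)
    hence e3: "int (card AB) + 2 = int m + int \<delta> + int s * (int \<delta> - 1)"
      by (simp only: of_nat_add e2 of_nat_numeral)
    have e4: "(int s + 1) * (int \<delta> - 1) = int s * (int \<delta> - 1) + (int \<delta> - 1)" by (simp add: distrib_right)
    show ?thesis using i1 e3 e4 by linarith
  qed
  have md: "min_dist n C = m + \<delta> - 1 \<and> is_optimal_LRC n C d r \<delta> (min_dist n C)"
    if ceil: "\<lceil>real d / real r\<rceil> = int s + 1"
  proof -
    have "real s < real d / real r" using ceil by (simp add: ceiling_eq_iff)
    hence "real s * real r < real d" using r1 by (simp add: pos_less_divide_eq)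
    hence sr: "s * r < d" by (metis of_nat_less_iff of_nat_mult)
    interpret lc: lincode C Fq n q
    proof
      show "finite C" by (rule finC)
      show "finite Fq" by simp
      show "card Fq = q" by (rule card_Fq)
      show "(\<lambda>_. 0) \<in> C" by (rule zero_C)
      show "\<And>x y. x \<in> C \<Longrightarrow> y \<in> C \<Longrightarrow> (\<lambda>l. x l - y l) \<in> C" by (rule diff_C)
      show "\<And>x l. x \<in> C \<Longrightarrow> x l \<in> Fq" using C_props by blast
      show "\<And>x l. x \<in> C \<Longrightarrow> n \<le> l \<Longrightarrow> x l = 0" using C_props by blast
    qed
    have loc: "\<exists>S. S \<subseteq> {..<n} \<and> a \<in> S \<and> card S \<le> r + \<delta> - 1 \<and>
                (\<forall>c\<in>C. card {l\<in>S. c l \<noteq> 0} < \<delta> \<longrightarrow> (\<forall>l\<in>S. c l = 0))" if an: "a < n" for a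
    proof -
      obtain S where S: "S \<subseteq> {..<n}" "a \<in> S" "card S \<le> dA"
        "\<forall>c\<in>C. card {l\<in>S. c l \<noteq> 0} < \<delta> \<longrightarrow> (\<forall>l\<in>S. c l = 0)"
        using locality[OF an] by blast
      have "card S \<le> r + \<delta> - 1" using S(3) r dA by simp
      thus ?thesis using S by blast
    qed
    have Gn: "d - 1 + s * (\<delta> - 1) \<le> n"
      using e1 cABn pos delta unfolding d_def by linarith
    obtain c where c: "c \<in> C" "c \<noteq> (\<lambda>_. 0)" "card {l. l < n \<and> c l \<noteq> 0} \<le> n - (d - 1 + s * (\<delta> - 1))"
      using lc.lrc_bound[OF q_ge2 card_C loc _ sr Gn] delta by auto
    have "n - (d - 1 + s * (\<delta> - 1)) = m + \<delta> - 1"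
      using e1 cABn pos delta unfolding d_def by linarith
    hence cw: "card {l. l < n \<and> c l \<noteq> 0} \<le> m + \<delta> - 1" using c(3) by simp
    define P where "P = {hdist {..<n} x y | x y. x \<in> C \<and> y \<in> C \<and> x \<noteq> y}"
    have hc: "hdist {..<n} c (\<lambda>_. 0) = card {l. l < n \<and> c l \<noteq> 0}"
      unfolding hdist_def by (rule arg_cong[where f=card]) auto
    have cP: "hdist {..<n} c (\<lambda>_. 0) \<in> P" unfolding P_def using c zero_C by blast
    have up: "min_dist n C \<le> m + \<delta> - 1"
      unfolding min_dist_def P_def[symmetric] using wellorder_Inf_le1[OF cP] hc cw by simp
    have "Inf P \<in> P" using Inf_nat_def1 cP by blast
    then obtain x y where xy: "x \<in> C" "y \<in> C" "x \<noteq> y" "Inf P = hdist {..<n} x y"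
      unfolding P_def by blast
    define z where "z = (\<lambda>l. x l - y l)"
    have zC: "z \<in> C" unfolding z_def using diff_C xy by blast
    obtain l0 where "x l0 \<noteq> y l0" using xy(3) by auto
    hence "z l0 \<noteq> 0" by (simp add: z_def)
    hence "m + \<delta> - 1 \<le> card {l. l < n \<and> z l \<noteq> 0}" by (rule bch_C[OF zC])
    also have "card {l. l < n \<and> z l \<noteq> 0} = Inf P"
      unfolding xy(4) hdist_def z_def by (rule arg_cong[where f=card]) auto
    finally have lo: "m + \<delta> - 1 \<le> min_dist n C" unfolding min_dist_def P_def by simp
    have eqd: "min_dist n C = m + \<delta> - 1" using up lo by simp
    have "int (min_dist n C) = int n - int d - (\<lceil>real d / real r\<rceil> - 1) * (int \<delta> - 1) + 1"
      using eqd ceil kint pos delta by (simp add: algebra_simps)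
    thus ?thesis using eqd LRC unfolding is_optimal_LRC_def by simp
  qed
  show ?thesis using LRC card_C kint md by blast
qed

end


theorem theorem5p1:
  fixes q n b s m t \<delta> :: nat and i :: "nat \<Rightarrow> int" and \<alpha> :: "'a::{field,finite}"
  assumes q_pp: "\<exists>p e. prime p \<and> e > 0 \<and> q = p ^ e"
    and card_F: "card (UNIV :: 'a set) = q ^ 2"
    and n_dvd: "n dvd q + 1"
    and prim: "\<alpha> ^ n = 1" "\<forall>j. 0 < j \<and> j < n \<longrightarrow> \<alpha> ^ j \<noteq> 1"
    and delta: "\<delta> \<ge> 2" "even \<delta>"
    and pos: "b > 0" "s > 0" "m > 0"
    and cop: "coprime b n"
    and t_lt: "t < n"
    and i_first: "int m - 1 + int \<delta> \<le> i 1"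
    and i_last: "i s \<le> int n - int \<delta>"
    and i_gap: "\<forall>l. 1 \<le> l \<and> l < s \<longrightarrow> i (l + 1) - i l \<ge> int \<delta>"
    and A_def: "A = {rpow \<alpha> n (int t + int j * int b) | j. j \<le> m - 1}
                 \<union> {rpow \<alpha> n (int t + i l * int b) | l. 1 \<le> l \<and> l \<le> s}"
    and B_def: "B = {rpow \<alpha> n (j * int b) | j::int.
                    - ((int \<delta> - 2) div 2) \<le> j \<and> j \<le> (int \<delta> - 2) div 2}"
    and cyclo: "\<forall>j<n. \<alpha> ^ j \<in> setmult A B \<longrightarrow> \<alpha> ^ ((j * q) mod n) \<in> setmult A B"
    and dA: "dA = min_dist n (dual_code n (cyc_code_ext n A))"
    and C_def: "C = cyc_code_sub q n (setmult A B)"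
    and r_def: "r = dA + 1 - \<delta>"
  shows "is_LRC n C r \<delta> \<and>
         (\<exists>k. card C = q ^ k \<and> int k = int n - int m + 1 - (int s + 1) * (int \<delta> - 1) \<and>
              (\<lceil>real k / real r\<rceil> = int s + 1 \<longrightarrow>
                 min_dist n C = m + \<delta> - 1 \<and> is_optimal_LRC n C k r \<delta> (min_dist n C)))"
proof -
  obtain p e where pe: "prime p" "e > 0" "q = p ^ e" using q_pp by blast
  have npos: "n > 0" using n_dvd by (metis add_is_0 dvd_0_left_iff gr0I zero_neq_one)
  interpret M: main q p e "TYPE('a)" \<alpha> n b s m t \<delta> i A B
  proof (unfold_locales)
    show "prime p" "0 < e" "q = p ^ e" using pe by auto
    show "card (UNIV :: 'a set) = q ^ 2" by (rule card_F)
    show "0 < n" by (rule npos)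
    show "\<alpha> ^ n = 1" "\<forall>j. 0 < j \<and> j < n \<longrightarrow> \<alpha> ^ j \<noteq> 1" using prim by auto
  qed (use n_dvd delta pos cop t_lt i_first i_last i_gap A_def B_def cyclo in auto)
  have CC: "C = M.C" by (simp add: C_def M.C_def M.AB_def)
  have DD: "dA = M.dA" by (simp add: dA M.dA_def M.D_def M.CA_def)
  show ?thesis using M.main_result[of r] r_def unfolding CC DD by simp
qed


end
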